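(* In the restricted cut-and-choose setting described in the context (Protocol 1), assume the expected number of test rounds satisfies $N\ge1$. Let $\varepsilon_H,\varepsilon_D\ge0$ be such that, for the input $\psi=|+\rangle\langle+|^{\otimes k}$ and unitary $U=\mathbb{1}_{\mathcal{X}}$, $$\tfrac12\big\|\rho_H-|+\rangle\langle+|^{\otimes k}\big\|_1\le\varepsilon_H$$ and, for every $\alpha\in\mathbb{R}$ (attack placement fixed as before or after the delegated unitary), $$\min_{p\in[0,1]}\tfrac12\big\|\rho^\alpha_D-\big(p|+\rangle\langle+|^{\otimes k}+(1-p)|\bot\rangle\langle\bot|\big)\big\|_1\le\varepsilon_D .$$ Then $\varepsilon_H+\varepsilon_D\ge\frac{1}{4\sqrt N}$.
   Context: Restricted cut-and-choose setting. Fix $k\ge 1$, $\mathcal{X}=\mathbb{C}^{2^k}$, $P(\alpha)=\mathrm{diag}(1,e^{i\alpha})$, $A_\alpha=\mathbb{1}_2^{\otimes(k-1)}\otimes P(\alpha)$, $|+\rangle=(|0\rangle+|1\rangle)/\sqrt2$, $|+_\alpha\rangle=(|0\rangle+e^{i\alpha}|1\rangle)/\sqrt2$. Let $\Omega$ be a probability distribution on $\mathbb{N}=\{0,1,\dots\}$ (number $n$ of test rounds) with finite mean $N=\sum_n n\Omega(n)$. For each $n$ and $i\in\{1,\dots,n+1\}$ there are a test unitary $T_{n,i}\in\mathrm{U}(\mathcal{X})$ and a test input unit vector $|\chi_{n,i}\rangle\in\mathcal{X}$, and for each $n$ an operator $0\le\mu_{k,n}\le\mathbb{1}$ on $\mathcal{X}^{\otimes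 n}$ (accept outcome). The output round $\ell$ is uniform on $\{1,\dots,n+1\}$, rounds $i\neq\ell$ are test rounds; after all rounds the client measures the $n$ test outputs with $\{\mu_{k,n},\mathbb{1}-\mu_{k,n}\}$, outputs the computation-round output on acceptance and $|\bot\rangle$ otherwise, where $|\bot\rangle$ is a unit vector orthogonal to $\mathcal{X}$. The phase attack with parameter $\alpha$ replaces every delegated unitary $T$ by $T^\alpha=TA_\alpha$ (for all rounds) or by $T^\alpha=A_\alpha T$ (for all rounds). Define $p^H_{n,\ell}=\mathrm{Tr}[\mu_{k,n}\bigotimes_{i\ne\ell}T_{n,i}|\chi_{n,i}\rangle\langle\chi_{n,i}|T_{n,i}^\dagger]$, $p^D_{n,\ell}$ the same with $T_{n,i}$ replaced by $T^\alpha_{n,i}$, $p_H=\sum_n\frac{\Omega(n)}{n+1}\sum_{\ell=1}^{n+1}p^H_{n,\ell}$, $p^\alpha_D=\sum_n\frac{\Omega(n)}{n+1}\sum_{\ell=1}^{n+1}p^D_{n,\ell}$. The client's output states are $\rho_H=p_H|+\rangle\langle+|^{\otimes k}+(1-p_H)|\bot\rangle\langle\bot|$ (honest) and $\rho^\alpha_D=p^\alpha_D|+\rangle\langle+|^{\otimes (k-1)}\otimes|+_\alpha\rangle\langle+_\alpha|+(1-p^\alpha_D)|\bot\rangle\langle\bot|$ (phase attack). These trace-distance conditions are implied by composable $\varepsilon_H$-correctness and $\varepsilon_D$-security with respect to the ideal VDQC resource, which outputs $U(\psi)$ if the server's bit $c=0$ and $\bot$ if $c=1$. *)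

theory Defs
  imports "Jordan_Normal_Form.Schur_Decomposition"
    "Jordan_Normal_Form.Char_Poly"
begin

definition cinner :: "complex vec \<Rightarrow> complex vec \<Rightarrow> complex" where
  "cinner u v = (\<Sum>i<dim_vec v. cnj (u $ i) * v $ i)"

definition unit_vector :: "nat \<Rightarrow> complex vec \<Rightarrow> bool" where
  "unit_vector n v \<longleftrightarrow> v \<in> carrier_vec n \<and> cinner v v = 1"

definition unitary_mat :: "nat \<Rightarrow> complex mat \<Rightarrow> bool" where
  "unitary_mat n U \<longleftrightarrow> U \<in> carrier_mat n n \<and> mat_adjoint U * U = 1\<^sub>m n"

definition psd :: "nat \<Rightarrow> complex mat \<Rightarrow> bool" where
  "psd n M \<longleftrightarrow> M \<in> carrier_mat n n \<and> mat_adjoint M = M \<and>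
     (\<forall>v \<in> carrier_vec n. cinner v (M *\<^sub>v v) \<in> \<real> \<and> 0 \<le> Re (cinner v (M *\<^sub>v v)))"

definition effect :: "nat \<Rightarrow> complex mat \<Rightarrow> bool" where
  "effect n M \<longleftrightarrow> psd n M \<and> psd n (1\<^sub>m n - M)"

definition mtrace :: "complex mat \<Rightarrow> complex" where
  "mtrace A = (\<Sum>i<dim_row A. A $$ (i, i))"

definition proj :: "complex vec \<Rightarrow> complex mat" where
  "proj v = mat (dim_vec v) (dim_vec v) (\<lambda>(i, j). v $ i * cnj (v $ j))"

text \<open>Trace norm = sum of singular values = sum of square roots of the eigenvalues
  (with multiplicity) of A^dagger A.\<close>
definition trace_norm :: "complex mat \<Rightarrow> real" where
  "trace_norm A = (\<Sum>x \<in># proots (char_poly (mat_adjoint A * A)). sqrt (Re x))"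

definition trace_dist :: "complex mat \<Rightarrow> complex mat \<Rightarrow> real" where
  "trace_dist A B = trace_norm (A - B) / 2"

definition kron_vec :: "complex vec \<Rightarrow> complex vec \<Rightarrow> complex vec" where
  "kron_vec u v = vec (dim_vec u * dim_vec v) (\<lambda>i. u $ (i div dim_vec v) * v $ (i mod dim_vec v))"

definition kron_mat :: "complex mat \<Rightarrow> complex mat \<Rightarrow> complex mat" where
  "kron_mat A B = mat (dim_row A * dim_row B) (dim_col A * dim_col B)
     (\<lambda>(i, j). A $$ (i div dim_row B, j div dim_col B) * B $$ (i mod dim_row B, j mod dim_col B))"

fun kron_vec_pow :: "complex vec \<Rightarrow> nat \<Rightarrow> complex vec" where
  "kron_vec_pow v 0 = vec 1 (\<lambda>_. 1)"
| "kron_vec_pow v (Suc n) = kron_vec (kron_vec_pow v n) v"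

fun kron_mat_pow :: "complex mat \<Rightarrow> nat \<Rightarrow> complex mat" where
  "kron_mat_pow A 0 = 1\<^sub>m 1"
| "kron_mat_pow A (Suc n) = kron_mat (kron_mat_pow A n) A"

fun kron_mats :: "complex mat list \<Rightarrow> complex mat" where
  "kron_mats [] = 1\<^sub>m 1"
| "kron_mats (A # As) = kron_mat A (kron_mats As)"

definition ket_plus :: "complex vec" where
  "ket_plus = vec_of_list [1 / sqrt 2, 1 / sqrt 2]"

definition ket_plus_alpha :: "real \<Rightarrow> complex vec" where
  "ket_plus_alpha a = vec_of_list [1 / sqrt 2, exp (\<i> * a) / sqrt 2]"

definition phase_gate :: "real \<Rightarrow> complex mat" where
  "phase_gate a = mat_of_rows_list 2 [[1, 0], [0, exp (\<i> * a)]]"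

definition A_alpha :: "nat \<Rightarrow> real \<Rightarrow> complex mat" where
  "A_alpha k a = kron_mat (kron_mat_pow (1\<^sub>m 2) (k - 1)) (phase_gate a)"

text \<open>The output space is X (+) span{|bot>}, modelled as C^(2^k + 1) where the last
  basis vector (index 2^k) is |bot>.\<close>
definition embed :: "complex vec \<Rightarrow> complex vec" where
  "embed v = vec (dim_vec v + 1) (\<lambda>i. if i < dim_vec v then v $ i else 0)"

definition ket_bot :: "nat \<Rightarrow> complex vec" where
  "ket_bot k = unit_vec (2 ^ k + 1) (2 ^ k)"

definition plus_k :: "nat \<Rightarrow> complex vec" where
  "plus_k k = embed (kron_vec_pow ket_plus k)"

definition plus_k_alpha :: "nat \<Rightarrow> real \<Rightarrow> complex vec" where
  "plus_k_alpha k a = embed (kron_vec (kron_vec_pow ket_plus (k - 1)) (ket_plus_alpha a))"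

text \<open>Acceptance probability of the tests when the rounds use unitaries T n i
  (output round l excluded), i.e. Tr[mu_{k,n} (tensor_{i /= l} T|chi><chi|T^dagger)].\<close>
definition accept_prob ::
  "(nat \<Rightarrow> complex mat) \<Rightarrow> (nat \<Rightarrow> nat \<Rightarrow> complex mat) \<Rightarrow> (nat \<Rightarrow> nat \<Rightarrow> complex vec)
     \<Rightarrow> nat \<Rightarrow> nat \<Rightarrow> complex" where
  "accept_prob \<mu> T chi n l = mtrace (\<mu> n * kron_mats
      (map (\<lambda>i. T n i * proj (chi n i) * mat_adjoint (T n i)) (filter (\<lambda>i. i \<noteq> l) [1..<n + 2])))"

definition avg_accept ::
  "(nat \<Rightarrow> real) \<Rightarrow> (nat \<Rightarrow> complex mat) \<Rightarrow> (nat \<Rightarrow> nat \<Rightarrow> complex mat) \<Rightarrow> (nat \<Rightarrow> nat \<Rightarrow> complex vec)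
     \<Rightarrow> complex" where
  "avg_accept \<Omega> \<mu> T chi =
     (\<Sum>n. complex_of_real (\<Omega> n / real (n + 1)) * (\<Sum>l = 1..n + 1. accept_prob \<mu> T chi n l))"

definition attacked :: "nat \<Rightarrow> bool \<Rightarrow> real \<Rightarrow> complex mat \<Rightarrow> complex mat" where
  "attacked k attack_after a U = (if attack_after then A_alpha k a * U else U * A_alpha k a)"

definition rho_H ::
  "nat \<Rightarrow> (nat \<Rightarrow> real) \<Rightarrow> (nat \<Rightarrow> complex mat) \<Rightarrow> (nat \<Rightarrow> nat \<Rightarrow> complex mat) \<Rightarrow> (nat \<Rightarrow> nat \<Rightarrow> complex vec)
     \<Rightarrow> complex mat" where
  "rho_H k \<Omega> \<mu> T chi = (let p = avg_accept \<Omega> \<mu> T chi in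
      p \<cdot>\<^sub>m proj (plus_k k) + (1 - p) \<cdot>\<^sub>m proj (ket_bot k))"

definition rho_D ::
  "nat \<Rightarrow> bool \<Rightarrow> real \<Rightarrow> (nat \<Rightarrow> real) \<Rightarrow> (nat \<Rightarrow> complex mat) \<Rightarrow> (nat \<Rightarrow> nat \<Rightarrow> complex mat)
     \<Rightarrow> (nat \<Rightarrow> nat \<Rightarrow> complex vec) \<Rightarrow> complex mat" where
  "rho_D k attack_after a \<Omega> \<mu> T chi =
     (let p = avg_accept \<Omega> \<mu> (\<lambda>n i. attacked k attack_after a (T n i)) chi in
      p \<cdot>\<^sub>m proj (plus_k_alpha k a) + (1 - p) \<cdot>\<^sub>m proj (ket_bot k))"

end

theory Submission
  imports Defs
begin

lemma adj_dim[simp]: "dim_row (mat_adjoint A) = dim_col A" "dim_col (mat_adjoint A) = dim_row A"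
  unfolding mat_adjoint_def by (auto simp: mat_of_rows_def)

lemma adj_carrier[simp]: "A \<in> carrier_mat n m \<Longrightarrow> mat_adjoint A \<in> carrier_mat m n"
  by (intro carrier_matI) auto

lemma adj_index[simp]: "i < dim_col A \<Longrightarrow> j < dim_row A \<Longrightarrow> mat_adjoint A $$ (i,j) = cnj (A $$ (j,i))"
  unfolding mat_adjoint_def mat_of_rows_def
  by (subst index_mat) auto

lemma adj_adj[simp]: "mat_adjoint (mat_adjoint (A :: complex mat)) = A"
  by (rule eq_matI) auto

lemma adj_mult: assumes "A \<in> carrier_mat n m" "B \<in> carrier_mat m p"
  shows "mat_adjoint (A * (B :: complex mat)) = mat_adjoint B * mat_adjoint A"
  apply (rule eq_matI)
  using assms by (auto simp: scalar_prod_def sum_distrib_left mult.commute intro!: sum.cong)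

lemma adj_one[simp]: "mat_adjoint (1\<^sub>m n :: complex mat) = 1\<^sub>m n"
  by (rule eq_matI) auto

lemma adj_add: assumes "A \<in> carrier_mat n m" "B \<in> carrier_mat n m"
  shows "mat_adjoint (A + (B :: complex mat)) = mat_adjoint A + mat_adjoint B"
  by (rule eq_matI) (use assms in auto)

lemma adj_minus: assumes "A \<in> carrier_mat n m" "B \<in> carrier_mat n m"
  shows "mat_adjoint (A - (B :: complex mat)) = mat_adjoint A - mat_adjoint B"
  by (rule eq_matI) (use assms in auto)

lemma adj_smult: "mat_adjoint (c \<cdot>\<^sub>m (A :: complex mat)) = cnj c \<cdot>\<^sub>m mat_adjoint A"
  by (rule eq_matI) auto

lemma cinner_carrier: "v \<in> carrier_vec n \<Longrightarrow> cinner u v = (\<Sum>i<n. cnj (u $ i) * v $ i)"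
  unfolding cinner_def by auto

lemma cinner_add_right: "v \<in> carrier_vec n \<Longrightarrow> w \<in> carrier_vec n \<Longrightarrow>
  cinner u (v + w) = cinner u v + cinner u w"
  by (simp add: cinner_carrier[of _ n] distrib_left sum.distrib)

lemma cinner_minus_right: "v \<in> carrier_vec n \<Longrightarrow> w \<in> carrier_vec n \<Longrightarrow>
  cinner u (v - w) = cinner u v - cinner u w"
  by (simp add: cinner_carrier[of _ n] right_diff_distrib sum_subtractf)

lemma cinner_smult_right: "cinner u (c \<cdot>\<^sub>v v) = c * cinner u v"
  by (simp add: cinner_def sum_distrib_left ac_simps)

lemma cinner_add_left: "u \<in> carrier_vec n \<Longrightarrow> w \<in> carrier_vec n \<Longrightarrow> v \<in> carrier_vec n \<Longrightarrow>
  cinner (u + w) v = cinner u v + cinner w v"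
  by (simp add: cinner_carrier[of _ n] distrib_right sum.distrib)

lemma cinner_minus_left: "u \<in> carrier_vec n \<Longrightarrow> w \<in> carrier_vec n \<Longrightarrow> v \<in> carrier_vec n \<Longrightarrow>
  cinner (u - w) v = cinner u v - cinner w v"
  by (simp add: cinner_carrier[of _ n] left_diff_distrib sum_subtractf)

lemma cinner_smult_left: "u \<in> carrier_vec n \<Longrightarrow> v \<in> carrier_vec n \<Longrightarrow>
  cinner (c \<cdot>\<^sub>v u) v = cnj c * cinner u v"
  by (simp add: cinner_carrier[of _ n] sum_distrib_left ac_simps)

lemma cinner_swap: "u \<in> carrier_vec n \<Longrightarrow> v \<in> carrier_vec n \<Longrightarrow> cinner v u = cnj (cinner u v)"
  by (simp add: cinner_carrier[of _ n] ac_simps)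

lemma mult_cnj_sq: "z * cnj z = (complex_of_real (cmod z))\<^sup>2"
  using complex_norm_square[of z] by simp

lemma cnj_mult_sq: "cnj z * z = (complex_of_real (cmod z))\<^sup>2"
  using mult_cnj_sq[of z] by (simp add: mult.commute)

lemma cinner_self_real: "cinner v v = complex_of_real (\<Sum>i<dim_vec v. (cmod (v $ i))\<^sup>2)"
  unfolding cinner_def of_real_sum by (rule sum.cong) (auto simp: cnj_mult_sq)

lemma cinner_self_ge0: "0 \<le> Re (cinner v v)" "Im (cinner v v) = 0"
  unfolding cinner_self_real by (auto intro: sum_nonneg)

lemma cinner_self_eq0: "v \<in> carrier_vec n \<Longrightarrow> cinner v v = 0 \<Longrightarrow> v = 0\<^sub>v n"
proof -
  assume v: "v \<in> carrier_vec n" and z: "cinner v v = 0"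
  hence "complex_of_real (\<Sum>i<n. (cmod (v $ i))\<^sup>2) = 0" using cinner_self_real[of v] v by simp
  hence "(\<Sum>i<n. (cmod (v $ i))\<^sup>2) = 0" by (simp only: of_real_eq_0_iff)
  hence "\<forall>i\<in>{..<n}. (cmod (v $ i))\<^sup>2 = 0" by (subst sum_nonneg_eq_0_iff[symmetric]) auto
  thus ?thesis using v by (auto intro!: eq_vecI)
qed

lemma cinner_mat_vec: assumes "M \<in> carrier_mat n m" "u \<in> carrier_vec n" "v \<in> carrier_vec m"
  shows "cinner u (M *\<^sub>v v) = cinner (mat_adjoint M *\<^sub>v u) v"
  using assms
  by (simp add: cinner_carrier[of _ n] cinner_carrier[of _ m] scalar_prod_def sum_distrib_left
      sum_distrib_right ac_simps sum.swap[of _ "{..<n}"] atLeast0LessThan)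

lemma mat_vec_assoc: "A \<in> carrier_mat n m \<Longrightarrow> B \<in> carrier_mat m p \<Longrightarrow> v \<in> carrier_vec p \<Longrightarrow>
  (A * B) *\<^sub>v v = A *\<^sub>v (B *\<^sub>v v)"
  by (simp add: assoc_mult_mat_vec)

lemma unitary_inner: assumes "unitary_mat n U" "u \<in> carrier_vec n" "v \<in> carrier_vec n"
  shows "cinner (U *\<^sub>v u) (U *\<^sub>v v) = cinner u v"
proof -
  have U: "U \<in> carrier_mat n n" and UU: "mat_adjoint U * U = 1\<^sub>m n" using assms unfolding unitary_mat_def by auto
  have "cinner (U *\<^sub>v u) (U *\<^sub>v v) = cinner (mat_adjoint U *\<^sub>v (U *\<^sub>v u)) v"
    using cinner_mat_vec[OF U _ assms(3)] assms U by auto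
  also have "mat_adjoint U *\<^sub>v (U *\<^sub>v u) = (mat_adjoint U * U) *\<^sub>v u"
    using U assms by (simp add: assoc_mult_mat_vec[symmetric, of _ n n _ n])
  also have "\<dots> = u" using UU assms by simp
  finally show ?thesis .
qed

lemma unitary_right: assumes "unitary_mat n U" shows "U * mat_adjoint U = 1\<^sub>m n"
proof -
  have U: "U \<in> carrier_mat n n" and UU: "mat_adjoint U * U = 1\<^sub>m n" using assms unfolding unitary_mat_def by auto
  show ?thesis using mat_mult_left_right_inverse[OF adj_carrier[OF U] U UU] .
qed


lemma cinner_cscalar: "dim_vec u = dim_vec w \<Longrightarrow> w \<bullet>c u = cinner u w"
  unfolding cinner_def scalar_prod_def
  by (auto simp: conjugate_complex_def mult.commute atLeast0LessThan intro!: sum.cong)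

lemma unitary_completion:
  assumes v: "v \<in> carrier_vec n" and v1: "cinner v v = 1"
  shows "\<exists>W. unitary_mat n W \<and> col W 0 = v"
proof -
  have v0: "v \<noteq> 0\<^sub>v n" using v1 by (auto simp: cinner_def)
  have n0: "n > 0" using v v1 by (cases "n = 0") (auto simp: cinner_def)
  interpret cof_vec_space n "TYPE(complex)" .
  define b where "b = basis_completion v"
  from basis_completion[OF v v0, folded b_def]
  have span_b: "span (set b) = carrier_vec n" and dist_b: "distinct b"
    and indep: "\<not> lin_dep (set b)" and bc: "set b \<subseteq> carrier_vec n" and hdb: "hd b = v"
    and len_b: "length b = n" by auto
  from hdb len_b n0 obtain vs where bv: "b = v # vs" by (cases b, auto)
  define ws where "ws = gram_schmidt n b"
  from gram_schmidt_result[OF bc dist_b indep ws_def]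
  have ws: "set ws \<subseteq> carrier_vec n" "corthogonal ws" "length ws = n"
    by (auto simp: len_b)
  have hdws: "hd ws = v" unfolding ws_def bv using gram_schmidt_hd[OF v] by simp
  have ws0: "ws ! 0 = v" using hdws n0 ws(3) by (cases ws) auto
  have wsc: "i < n \<Longrightarrow> ws ! i \<in> carrier_vec n" for i using ws by auto
  have orth: "i < n \<Longrightarrow> j < n \<Longrightarrow> cinner (ws ! i) (ws ! j) = 0 \<longleftrightarrow> i \<noteq> j" for i j
    using corthogonalD[OF ws(2), of j i] ws(3) cinner_cscalar[of "ws ! i" "ws ! j"] wsc[of i] wsc[of j]
    by auto
  define r where "r i = Re (cinner (ws ! i) (ws ! i))" for i
  have rpos: "i < n \<Longrightarrow> r i > 0" for i
  proof -
    assume i: "i < n"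
    have "cinner (ws ! i) (ws ! i) \<noteq> 0" using orth[OF i i] by auto
    moreover have "cinner (ws ! i) (ws ! i) = complex_of_real (r i)"
      using cinner_self_ge0[of "ws ! i"] unfolding r_def by (simp add: complex_eq_iff)
    ultimately show ?thesis using cinner_self_ge0[of "ws ! i"] unfolding r_def
      by (metis less_eq_real_def of_real_0)
  qed
  have rcin: "cinner (ws ! i) (ws ! i) = complex_of_real (r i)" for i
    using cinner_self_ge0[of "ws ! i"] unfolding r_def by (simp add: complex_eq_iff)
  define c where "c i = complex_of_real (1 / sqrt (r i))" for i
  define nws where "nws = map (\<lambda>i. c i \<cdot>\<^sub>v ws ! i) [0..<n]"
  define W where "W = mat_of_cols n nws"
  have nwsc: "i < n \<Longrightarrow> nws ! i = c i \<cdot>\<^sub>v ws ! i" for i unfolding nws_def by auto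
  have W: "W \<in> carrier_mat n n" unfolding W_def nws_def by auto
  have Wcol: "j < n \<Longrightarrow> col W j = nws ! j" for j
    unfolding W_def by (rule col_mat_of_cols) (auto simp: nws_def wsc)
  have Wij: "i < n \<Longrightarrow> j < n \<Longrightarrow> W $$ (i, j) = c j * (ws ! j) $ i" for i j
    unfolding W_def nws_def using wsc[of j] by (auto simp: mat_of_cols_def)
  have "mat_adjoint W * W = 1\<^sub>m n"
  proof (rule eq_matI)
    fix i j assume i: "i < dim_row (1\<^sub>m n)" and j: "j < dim_col (1\<^sub>m n)"
    hence i: "i < n" and j: "j < n" by auto
    have "(mat_adjoint W * W) $$ (i, j) = (\<Sum>k<n. cnj (W $$ (k, i)) * W $$ (k, j))"
      using W i j by (simp add: scalar_prod_def atLeast0LessThan)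
    also have "\<dots> = cnj (c i) * c j * cinner (ws ! i) (ws ! j)"
      using i j wsc[of j] by (simp add: Wij cinner_carrier[of _ n] sum_distrib_left ac_simps)
    also have "\<dots> = 1\<^sub>m n $$ (i, j)"
    proof (cases "i = j")
      case True
      have e1: "(1 / sqrt (r i)) * (1 / sqrt (r i)) * r i = 1"
      proof -
        have "sqrt (r i) * sqrt (r i) = r i" using rpos[OF i] by simp
        thus ?thesis using rpos[OF i] by (simp add: field_simps)
      qed
      have "cnj (c i) * c i * complex_of_real (r i) = complex_of_real ((1 / sqrt (r i)) * (1 / sqrt (r i)) * r i)"
        unfolding c_def by (simp only: complex_cnj_complex_of_real of_real_mult)
      also have "\<dots> = 1" by (simp only: e1 of_real_1)
      finally show ?thesis using True i rcin by simp
    next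
      case False thus ?thesis using orth[OF i j] i j by simp
    qed
    finally show "(mat_adjoint W * W) $$ (i, j) = 1\<^sub>m n $$ (i, j)" .
  qed (use W in auto)
  hence "unitary_mat n W" using W unfolding unitary_mat_def by auto
  moreover have "col W 0 = v"
  proof -
    have "r 0 = 1" unfolding r_def ws0 v1 by simp
    thus ?thesis using Wcol[OF n0] nwsc[OF n0] ws0 v by (simp add: c_def)
  qed
  ultimately show ?thesis by blast
qed


lemma mult_carrier_sq[simp]: "A \<in> carrier_mat n n \<Longrightarrow> B \<in> carrier_mat n n \<Longrightarrow> A * B \<in> carrier_mat n n"
  by auto

lemma mult_assoc_sq: "A \<in> carrier_mat n n \<Longrightarrow> B \<in> carrier_mat n n \<Longrightarrow> C \<in> carrier_mat n n \<Longrightarrow>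
  A * B * C = A * (B * C)"
  by (rule assoc_mult_mat)

definition diagm :: "nat \<Rightarrow> (nat \<Rightarrow> complex) \<Rightarrow> complex mat" where
  "diagm n d = mat n n (\<lambda>(i,j). if i = j then d i else 0)"

lemma diagm_dim[simp]: "dim_row (diagm n d) = n" "dim_col (diagm n d) = n"
  unfolding diagm_def by auto

lemma diagm_carrier[simp]: "diagm n d \<in> carrier_mat n n"
  unfolding diagm_def by auto

lemma mult_diagm_index: assumes U: "U \<in> carrier_mat m n" and i: "i < m" and l: "l < n"
  shows "(U * diagm n d) $$ (i, l) = U $$ (i, l) * d l"
proof -
  have "(U * diagm n d) $$ (i, l) = (\<Sum>k\<in>{0..<n}. U $$ (i, k) * (if k = l then d k else 0))"
    using U i l by (simp add: scalar_prod_def diagm_def)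
  also have "\<dots> = U $$ (i, l) * d l"
    by (simp add: if_distrib[of "\<lambda>x. _ * x"] sum.delta' l cong: if_cong)
  finally show ?thesis .
qed

lemma UDU_index: assumes U: "U \<in> carrier_mat m n" and i: "i < m" and j: "j < m"
  shows "(U * diagm n d * mat_adjoint U) $$ (i, j) = (\<Sum>k<n. U $$ (i, k) * d k * cnj (U $$ (j, k)))"
proof -
  have "(U * diagm n d * mat_adjoint U) $$ (i, j) = (\<Sum>k\<in>{0..<n}. (U * diagm n d) $$ (i, k) * mat_adjoint U $$ (k, j))"
    using U i j by (auto simp: scalar_prod_def intro!: sum.cong)
  also have "\<dots> = (\<Sum>k<n. U $$ (i, k) * d k * cnj (U $$ (j, k)))"
    unfolding atLeast0LessThan
  proof (rule sum.cong[OF refl])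
    fix k assume "k \<in> {..<n}" hence k: "k < n" by simp
    show "(U * diagm n d) $$ (i, k) * mat_adjoint U $$ (k, j) = U $$ (i, k) * d k * cnj (U $$ (j, k))"
      by (subst mult_diagm_index[OF U i k]) (use U j k in simp)
  qed
  finally show ?thesis .
qed

lemma unitary_mult: assumes "unitary_mat n U" "unitary_mat n V" shows "unitary_mat n (U * V)"
proof -
  have U: "U \<in> carrier_mat n n" and UU: "mat_adjoint U * U = 1\<^sub>m n"
   and V: "V \<in> carrier_mat n n" and VV: "mat_adjoint V * V = 1\<^sub>m n"
    using assms unfolding unitary_mat_def by auto
  have "mat_adjoint (U * V) * (U * V) = (mat_adjoint V * mat_adjoint U) * (U * V)"
    using U V by (simp add: adj_mult[OF U V])
  also have "\<dots> = mat_adjoint V * (mat_adjoint U * (U * V))"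
    using U V by (simp add: assoc_mult_mat[of _ n n _ n _ n])
  also have "mat_adjoint U * (U * V) = (mat_adjoint U * U) * V"
    using U V by (simp add: assoc_mult_mat[of _ n n _ n _ n])
  also have "\<dots> = V" using UU V by simp
  also have "mat_adjoint V * V = 1\<^sub>m n" using VV .
  finally show ?thesis using U V unfolding unitary_mat_def by auto
qed

lemma unitary_col_unit: assumes "unitary_mat n U" "k < n" shows "cinner (col U k) (col U k) = 1"
proof -
  have U: "U \<in> carrier_mat n n" and UU: "mat_adjoint U * U = 1\<^sub>m n"
    using assms unfolding unitary_mat_def by auto
  have "cinner (col U k) (col U k) = (mat_adjoint U * U) $$ (k, k)"
    using U assms(2) by (simp add: cinner_carrier[of _ n] scalar_prod_def atLeast0LessThan)
  thus ?thesis using UU assms(2) by simp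
qed

theorem hermitian_spectral:
  assumes "A \<in> carrier_mat n n" "mat_adjoint A = A"
  shows "\<exists>U d. unitary_mat n U \<and> (\<forall>i. Im (d i) = 0) \<and> A = U * diagm n d * mat_adjoint U"
  using assms
proof (induction n arbitrary: A)
  case 0
  show ?case
    by (rule exI[of _ "1\<^sub>m 0"], rule exI[of _ "\<lambda>_. 0"])
       (use 0 in \<open>auto simp: unitary_mat_def intro!: eq_matI\<close>)
next
  case (Suc m A)
  let ?n = "Suc m"
  have A: "A \<in> carrier_mat ?n ?n" and herm: "mat_adjoint A = A" using Suc.prems by auto
  obtain as where cp: "char_poly A = (\<Prod>a\<leftarrow>as. [:- a, 1:])" and las: "length as = ?n"
    using char_poly_factorized[OF A] by auto
  then obtain e as' where as: "as = e # as'" by (cases as) auto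
  have "poly (\<Prod>a\<leftarrow>as. [:- a, 1:]) e = 0" unfolding as
    by (simp only: list.map prod_list.Cons poly_mult) simp
  hence "poly (char_poly A) e = 0" by (simp only: cp)
  hence "eigenvalue A e" using eigenvalue_root_char_poly[OF A] by simp
  then obtain v where ev: "eigenvector A v e" unfolding eigenvalue_def by auto
  hence v: "v \<in> carrier_vec ?n" and v0: "v \<noteq> 0\<^sub>v ?n" and Av: "A *\<^sub>v v = e \<cdot>\<^sub>v v"
    using A unfolding eigenvector_def by auto
  define r where "r = Re (cinner v v)"
  have cvv: "cinner v v = complex_of_real r" using cinner_self_ge0[of v] unfolding r_def
    by (simp add: complex_eq_iff)
  have rpos: "r > 0"
  proof -
    have "cinner v v \<noteq> 0" using cinner_self_eq0[OF v] v0 by auto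
    hence "r \<noteq> 0" using cvv by auto
    moreover have "r \<ge> 0" unfolding r_def using cinner_self_ge0(1)[of v] by simp
    ultimately show ?thesis by simp
  qed
  define v' where "v' = complex_of_real (1 / sqrt r) \<cdot>\<^sub>v v"
  have v': "v' \<in> carrier_vec ?n" using v unfolding v'_def by auto
  have v'1: "cinner v' v' = 1"
  proof -
    have "cinner v' v' = complex_of_real (1 / sqrt r) * complex_of_real (1 / sqrt r) * cinner v v"
      unfolding v'_def using v by (simp add: cinner_smult_left[of _ ?n] cinner_smult_right)
    also have "\<dots> = complex_of_real ((1 / sqrt r) * (1 / sqrt r) * r)"
      by (simp only: cvv of_real_mult)
    also have "(1 / sqrt r) * (1 / sqrt r) * r = 1"
    proof -
      have "sqrt r * sqrt r = r" using rpos by simp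
      thus ?thesis using rpos by (simp add: field_simps)
    qed
    finally show ?thesis by simp
  qed
  have Av': "A *\<^sub>v v' = e \<cdot>\<^sub>v v'"
    unfolding v'_def using A v Av by (simp add: mult_mat_vec smult_smult_assoc mult.commute)
  obtain W where Wu: "unitary_mat ?n W" and Wc: "col W 0 = v'"
    using unitary_completion[OF v' v'1] by auto
  have W: "W \<in> carrier_mat ?n ?n" and WW: "mat_adjoint W * W = 1\<^sub>m ?n"
    using Wu unfolding unitary_mat_def by auto
  have WW': "W * mat_adjoint W = 1\<^sub>m ?n" using unitary_right[OF Wu] .
  define B where "B = mat_adjoint W * A * W"
  have B: "B \<in> carrier_mat ?n ?n" unfolding B_def using W A by auto
  have Bherm: "mat_adjoint B = B"
    unfolding B_def using W A herm
    by (simp add: adj_mult[of _ ?n ?n _ ?n] mult_assoc_sq[of _ ?n])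
  have colB: "col B 0 = e \<cdot>\<^sub>v unit_vec ?n 0"
  proof -
    have "col B 0 = (mat_adjoint W * A) *\<^sub>v col W 0"
      unfolding B_def using W A by (subst col_mult2[of _ ?n ?n]) auto
    also have "\<dots> = mat_adjoint W *\<^sub>v (A *\<^sub>v v')"
      unfolding Wc by (rule assoc_mult_mat_vec[of _ ?n ?n _ ?n]) (use W A v' in auto)
    also have "\<dots> = e \<cdot>\<^sub>v (mat_adjoint W *\<^sub>v v')" using mult_mat_vec[OF adj_carrier[OF W] v'] Av' by simp
    also have "mat_adjoint W *\<^sub>v v' = col (mat_adjoint W * W) 0"
      using W Wc by (subst col_mult2[of _ ?n ?n]) auto
    also have "\<dots> = unit_vec ?n 0" using WW by simp
    finally show ?thesis .
  qed
  have Bi0: "i < ?n \<Longrightarrow> B $$ (i, 0) = (if i = 0 then e else 0)" for i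
    using arg_cong[OF colB, of "\<lambda>x. x $ i"] B by (auto simp: unit_vec_def)
  have Bji: "i < ?n \<Longrightarrow> j < ?n \<Longrightarrow> B $$ (i, j) = cnj (B $$ (j, i))" for i j
    using arg_cong[OF Bherm, of "\<lambda>X. X $$ (i, j)"] B by simp
  have ereal: "Im e = 0"
    using Bji[of 0 0] Bi0[of 0] by (simp add: complex_eq_iff)
  have B0j: "j < ?n \<Longrightarrow> B $$ (0, j) = (if j = 0 then e else 0)" for j
    using Bji[of 0 j] Bi0[of j] ereal by (auto simp: complex_eq_iff)
  define B3 where "B3 = mat m m (\<lambda>(i, j). B $$ (Suc i, Suc j))"
  have B3: "B3 \<in> carrier_mat m m" unfolding B3_def by auto
  have B3herm: "mat_adjoint B3 = B3"
  proof (rule eq_matI)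
    fix i j assume "i < dim_row B3" "j < dim_col B3"
    hence i: "i < m" and j: "j < m" using B3 by auto
    show "mat_adjoint B3 $$ (i, j) = B3 $$ (i, j)"
      using Bji[of "Suc i" "Suc j"] i j by (simp add: B3_def)
  qed (use B3 in auto)
  obtain U' d' where U'u: "unitary_mat m U'" and d'r: "\<forall>i. Im (d' i) = 0"
    and B3d: "B3 = U' * diagm m d' * mat_adjoint U'"
    using Suc.IH[OF B3 B3herm] by auto
  have U': "U' \<in> carrier_mat m m" and U'U': "mat_adjoint U' * U' = 1\<^sub>m m"
    using U'u unfolding unitary_mat_def by auto
  define V where "V = mat ?n ?n (\<lambda>(i, j). if i = 0 \<and> j = 0 then 1 else if i = 0 \<or> j = 0 then 0
      else U' $$ (i - 1, j - 1))"
  define d where "d k = (if k = 0 then e else d' (k - 1))" for k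
  have V: "V \<in> carrier_mat ?n ?n" unfolding V_def by auto
  have VV: "mat_adjoint V * V = 1\<^sub>m ?n"
  proof (rule eq_matI)
    fix i j assume "i < dim_row (1\<^sub>m ?n)" "j < dim_col (1\<^sub>m ?n)"
    hence i: "i < ?n" and j: "j < ?n" by auto
    have "(mat_adjoint V * V) $$ (i, j) = (\<Sum>k<?n. cnj (V $$ (k, i)) * V $$ (k, j))"
      using V i j by (simp add: scalar_prod_def atLeast0LessThan)
    also have "\<dots> = cnj (V $$ (0, i)) * V $$ (0, j) + (\<Sum>k<m. cnj (V $$ (Suc k, i)) * V $$ (Suc k, j))"
      by (subst sum.lessThan_Suc_shift) simp
    also have "\<dots> = 1\<^sub>m ?n $$ (i, j)"
    proof (cases "i = 0 \<or> j = 0")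
      case True thus ?thesis using i j by (auto simp: V_def)
    next
      case False
      then obtain i' j' where ii: "i = Suc i'" and jj: "j = Suc j'" by (cases i; cases j) auto
      have "(\<Sum>k<m. cnj (V $$ (Suc k, i)) * V $$ (Suc k, j)) = (\<Sum>k<m. cnj (U' $$ (k, i')) * U' $$ (k, j'))"
        using i j ii jj by (auto simp: V_def intro!: sum.cong)
      also have "\<dots> = (mat_adjoint U' * U') $$ (i', j')"
        using U' i j ii jj by (simp add: scalar_prod_def atLeast0LessThan)
      also have "\<dots> = 1\<^sub>m ?n $$ (i, j)" using U'U' i j ii jj by simp
      finally show ?thesis using ii jj i j by (simp add: V_def)
    qed
    finally show "(mat_adjoint V * V) $$ (i, j) = 1\<^sub>m ?n $$ (i, j)" .
  qed (use V in auto)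
  have Vu: "unitary_mat ?n V" using V VV unfolding unitary_mat_def by auto
  have BV: "B = V * diagm ?n d * mat_adjoint V"
  proof (rule eq_matI)
    fix i j assume "i < dim_row (V * diagm ?n d * mat_adjoint V)" "j < dim_col (V * diagm ?n d * mat_adjoint V)"
    hence i: "i < ?n" and j: "j < ?n" using V by auto
    have "(V * diagm ?n d * mat_adjoint V) $$ (i, j) = (\<Sum>k<?n. V $$ (i, k) * d k * cnj (V $$ (j, k)))"
      using UDU_index[OF V i j] .
    also have "\<dots> = V $$ (i, 0) * d 0 * cnj (V $$ (j, 0)) + (\<Sum>k<m. V $$ (i, Suc k) * d (Suc k) * cnj (V $$ (j, Suc k)))"
      by (subst sum.lessThan_Suc_shift) simp
    also have "\<dots> = B $$ (i, j)"
    proof (cases "i = 0 \<or> j = 0")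
      case True thus ?thesis using i j Bi0 B0j ereal by (auto simp: V_def d_def complex_eq_iff)
    next
      case False
      then obtain i' j' where ii: "i = Suc i'" and jj: "j = Suc j'" by (cases i; cases j) auto
      have "(\<Sum>k<m. V $$ (i, Suc k) * d (Suc k) * cnj (V $$ (j, Suc k))) = (\<Sum>k<m. U' $$ (i', k) * d' k * cnj (U' $$ (j', k)))"
        using i j ii jj by (auto simp: V_def d_def intro!: sum.cong)
      also have "\<dots> = B3 $$ (i', j')" using UDU_index[OF U', of i' j' d'] i j ii jj B3d by simp
      also have "\<dots> = B $$ (i, j)" using i j ii jj by (simp add: B3_def)
      finally show ?thesis using ii jj i j by (simp add: V_def)
    qed
    finally show "B $$ (i, j) = (V * diagm ?n d * mat_adjoint V) $$ (i, j)" by simp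
  qed (use V B in auto)
  have "A = W * B * mat_adjoint W"
  proof -
    have "W * B * mat_adjoint W = (W * mat_adjoint W) * A * (W * mat_adjoint W)"
      unfolding B_def using W A by (simp add: mult_assoc_sq[of _ ?n])
    thus ?thesis using WW' A by simp
  qed
  also have "\<dots> = (W * V) * diagm ?n d * mat_adjoint (W * V)"
    unfolding BV using W V by (simp add: adj_mult[OF W V] mult_assoc_sq[of _ ?n])
  finally have "A = (W * V) * diagm ?n d * mat_adjoint (W * V)" .
  moreover have "\<forall>i. Im (d i) = 0" using d'r ereal by (simp add: d_def)
  ultimately show ?case using unitary_mult[OF Wu Vu] by blast
qed


lemma proots_lin: "proots [:- a, 1:] = {#a :: complex#}"
proof (rule multiset_eqI)
  fix x
  have "order x ([:- a, 1:] ^ Suc 0) = (if - a = - x then Suc 0 else 0)"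
    by (rule order_linear_power')
  thus "count (proots [:- a, 1:]) x = count {#a#} x" by auto
qed

lemma proots_prod_lin: "proots (\<Prod>a\<leftarrow>xs. [:- a, 1:]) = mset (xs :: complex list)"
proof (induction xs)
  case Nil thus ?case by simp
next
  case (Cons a xs)
  have nz: "(\<Prod>a\<leftarrow>xs. [:- a, 1:]) \<noteq> (0 :: complex poly)" by (auto simp: prod_list_zero_iff)
  have "proots (\<Prod>a\<leftarrow>a # xs. [:- a, 1:]) = proots ([:-a, 1:] * (\<Prod>a\<leftarrow>xs. [:- a, 1:]))"
    by (simp only: list.map prod_list.Cons)
  also have "\<dots> = proots [:-a, 1:] + proots (\<Prod>a\<leftarrow>xs. [:- a, 1:])"
    by (rule proots_mult) (use nz in auto)
  also have "\<dots> = {#a#} + mset xs" using Cons.IH proots_lin by simp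
  finally show ?case by simp
qed

lemma sum_list_map_upt: "sum_list (map f [0..<n]) = (\<Sum>i<n. f i)"
  by (induction n) auto

lemma smult_mat_vec: "A \<in> carrier_mat n m \<Longrightarrow> v \<in> carrier_vec m \<Longrightarrow>
  (c \<cdot>\<^sub>m A) *\<^sub>v v = c \<cdot>\<^sub>v (A *\<^sub>v (v :: complex vec))"
  by (rule eq_vecI) (auto simp: scalar_prod_def sum_distrib_left ac_simps)

lemma diagm_mult: "diagm n d * diagm n d = diagm n (\<lambda>i. d i * d i)"
proof (rule eq_matI)
  fix i j assume "i < dim_row (diagm n (\<lambda>i. d i * d i))" "j < dim_col (diagm n (\<lambda>i. d i * d i))"
  hence i: "i < n" and j: "j < n" by auto
  show "(diagm n d * diagm n d) $$ (i, j) = diagm n (\<lambda>i. d i * d i) $$ (i, j)"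
    by (subst mult_diagm_index[of _ n n]) (use i j in \<open>auto simp: diagm_def\<close>)
qed auto

theorem trace_norm_spec:
  assumes A: "A \<in> carrier_mat n n" and herm: "mat_adjoint A = A"
    and Uu: "unitary_mat n U" and dr: "\<forall>i. Im (d i) = 0" and AU: "A = U * diagm n d * mat_adjoint U"
  shows "trace_norm A = (\<Sum>i<n. cmod (d i))"
proof -
  have U: "U \<in> carrier_mat n n" and UU: "mat_adjoint U * U = 1\<^sub>m n" using Uu unfolding unitary_mat_def by auto
  have UU': "U * mat_adjoint U = 1\<^sub>m n" using unitary_right[OF Uu] .
  define dd where "dd = (\<lambda>i. d i * d i)"
  have "A * A = U * diagm n d * (mat_adjoint U * U) * diagm n d * mat_adjoint U"
    unfolding AU using U by (simp add: mult_assoc_sq[of _ n])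
  also have "\<dots> = U * diagm n dd * mat_adjoint U"
    using U UU by (simp add: mult_assoc_sq[of _ n] diagm_mult dd_def)
  finally have AA: "A * A = U * diagm n dd * mat_adjoint U" .
  have "similar_mat_wit (A * A) (diagm n dd) U (mat_adjoint U)"
    unfolding similar_mat_wit_def Let_def using A U UU UU' AA by auto
  hence "char_poly (A * A) = char_poly (diagm n dd)"
    by (intro char_poly_similar) (auto simp: similar_mat_def)
  also have "\<dots> = (\<Prod>a\<leftarrow>diag_mat (diagm n dd). [:- a, 1:])"
    by (rule char_poly_upper_triangular[of _ n]) (auto simp: upper_triangular_def diagm_def)
  also have "diag_mat (diagm n dd) = map dd [0..<n]"
    by (auto simp: diag_mat_def diagm_def)
  finally have cp: "char_poly (mat_adjoint A * A) = (\<Prod>a\<leftarrow>map dd [0..<n]. [:- a, 1:])"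
    using herm by simp
  have "trace_norm A = (\<Sum>x\<in>#mset (map dd [0..<n]). sqrt (Re x))"
    unfolding trace_norm_def cp proots_prod_lin ..
  also have "\<dots> = (\<Sum>i<n. sqrt (Re (dd i)))"
    by (simp add: sum_mset_sum_list sum_list_map_upt flip: mset_map)
  also have "\<dots> = (\<Sum>i<n. cmod (d i))"
  proof (rule sum.cong[OF refl])
    fix i
    have "d i = complex_of_real (Re (d i))" using dr by (simp add: complex_eq_iff)
    hence "Re (dd i) = (Re (d i))\<^sup>2" and "cmod (d i) = \<bar>Re (d i)\<bar>"
      unfolding dd_def by (metis Re_complex_of_real of_real_mult power2_eq_square, metis norm_of_real)
    thus "sqrt (Re (dd i)) = cmod (d i)" by simp
  qed
  finally show ?thesis .
qed

lemma mtrace_spec: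
  assumes U: "U \<in> carrier_mat n n" and M: "M \<in> carrier_mat n n"
  shows "mtrace (U * diagm n d * mat_adjoint U * M) = (\<Sum>k<n. d k * cinner (col U k) (M *\<^sub>v col U k))"
proof -
  let ?A = "U * diagm n d * mat_adjoint U"
  have A: "?A \<in> carrier_mat n n" using U by auto
  have "mtrace (?A * M) = (\<Sum>a<n. \<Sum>b<n. ?A $$ (a, b) * M $$ (b, a))"
    unfolding mtrace_def using A M by (auto simp: scalar_prod_def atLeast0LessThan intro!: sum.cong)
  also have "\<dots> = (\<Sum>a<n. \<Sum>b<n. \<Sum>k<n. U $$ (a, k) * d k * cnj (U $$ (b, k)) * M $$ (b, a))"
  proof (intro sum.cong refl)
    fix a b assume "a \<in> {..<n}" "b \<in> {..<n}"
    thus "?A $$ (a, b) * M $$ (b, a) = (\<Sum>k<n. U $$ (a, k) * d k * cnj (U $$ (b, k)) * M $$ (b, a))"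
      by (subst UDU_index[OF U]) (auto simp: sum_distrib_right)
  qed
  also have "\<dots> = (\<Sum>k<n. \<Sum>b<n. \<Sum>a<n. U $$ (a, k) * d k * cnj (U $$ (b, k)) * M $$ (b, a))"
    by (subst sum.swap, subst (2) sum.swap, subst sum.swap) (rule refl)
  also have "\<dots> = (\<Sum>k<n. d k * cinner (col U k) (M *\<^sub>v col U k))"
    using U M by (auto simp: cinner_carrier[of _ n] scalar_prod_def sum_distrib_left atLeast0LessThan ac_simps
        intro!: sum.cong)
  finally show ?thesis .
qed

theorem trace_norm_lower:
  assumes A: "A \<in> carrier_mat n n" and herm: "mat_adjoint A = A" and M: "M \<in> carrier_mat n n"
    and Mb: "\<And>q. q \<in> carrier_vec n \<Longrightarrow> cinner q q = 1 \<Longrightarrow> cmod (cinner q (M *\<^sub>v q)) \<le> 1"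
  shows "cmod (mtrace (A * M)) \<le> trace_norm A"
proof -
  obtain U d where Uu: "unitary_mat n U" and dr: "\<forall>i. Im (d i) = 0" and AU: "A = U * diagm n d * mat_adjoint U"
    using hermitian_spectral[OF A herm] by auto
  have U: "U \<in> carrier_mat n n" using Uu unfolding unitary_mat_def by auto
  have "cmod (mtrace (A * M)) = cmod (\<Sum>k<n. d k * cinner (col U k) (M *\<^sub>v col U k))"
    unfolding AU using mtrace_spec[OF U M] by simp
  also have "\<dots> \<le> (\<Sum>k<n. cmod (d k * cinner (col U k) (M *\<^sub>v col U k)))"
    by (rule norm_sum)
  also have "\<dots> \<le> (\<Sum>k<n. cmod (d k))"
  proof (rule sum_mono)
    fix k assume "k \<in> {..<n}" hence k: "k < n" by simp
    have "cmod (cinner (col U k) (M *\<^sub>v col U k)) \<le> 1"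
      using Mb[of "col U k"] unitary_col_unit[OF Uu k] U k by auto
    thus "cmod (d k * cinner (col U k) (M *\<^sub>v col U k)) \<le> cmod (d k)"
      by (simp add: norm_mult mult_left_le)
  qed
  also have "\<dots> = trace_norm A" using trace_norm_spec[OF A herm Uu dr AU] by simp
  finally show ?thesis .
qed

fun orthonormal :: "nat \<Rightarrow> complex vec list \<Rightarrow> bool" where
  "orthonormal n [] = True"
| "orthonormal n (e # es) \<longleftrightarrow> e \<in> carrier_vec n \<and> cinner e e = 1 \<and>
     (\<forall>f\<in>set es. cinner e f = 0 \<and> cinner f e = 0) \<and> orthonormal n es"

lemma bessel: "orthonormal n es \<Longrightarrow> x \<in> carrier_vec n \<Longrightarrow>
  (\<Sum>e\<leftarrow>es. (cmod (cinner e x))\<^sup>2) \<le> Re (cinner x x)"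
proof (induction es arbitrary: x)
  case Nil thus ?case using cinner_self_ge0[of x] by simp
next
  case (Cons e es x)
  have e: "e \<in> carrier_vec n" and e1: "cinner e e = 1" and orth: "\<forall>f\<in>set es. cinner e f = 0 \<and> cinner f e = 0"
    and es: "orthonormal n es" using Cons.prems by auto
  have x: "x \<in> carrier_vec n" using Cons.prems by auto
  define c where "c = cinner e x"
  define x' where "x' = x - c \<cdot>\<^sub>v e"
  have x': "x' \<in> carrier_vec n" unfolding x'_def using x e by auto
  have cx: "cinner x e = cnj c" unfolding c_def using cinner_swap[OF e x] by simp
  have "cinner x' x' = cinner x x - cnj c * cinner e x - c * cinner x e + cnj c * c * cinner e e"
    unfolding x'_def using x e
    by (simp add: cinner_minus_left[of _ n] cinner_minus_right[of _ n] cinner_smult_left[of _ n]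
        cinner_smult_right algebra_simps)
  also have "\<dots> = cinner x x - cnj c * c" unfolding c_def[symmetric] cx e1 by simp
  finally have "Re (cinner x' x') = Re (cinner x x) - (cmod c)\<^sup>2"
    by (simp add: cnj_mult_sq)
  moreover have "\<And>f. f \<in> set es \<Longrightarrow> cinner f x' = cinner f x"
    unfolding x'_def using x e orth by (simp add: cinner_minus_right[of _ n] cinner_smult_right)
  hence "(\<Sum>f\<leftarrow>es. (cmod (cinner f x'))\<^sup>2) = (\<Sum>f\<leftarrow>es. (cmod (cinner f x))\<^sup>2)"
    by (metis (no_types, lifting) map_eq_conv)
  ultimately show ?case using Cons.IH[OF es x'] by (simp add: c_def)
qed

lemma proj_carrier[simp]: "v \<in> carrier_vec n \<Longrightarrow> proj v \<in> carrier_mat n n"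
  unfolding proj_def by auto

lemma proj_mult_vec: assumes e: "e \<in> carrier_vec n" and q: "q \<in> carrier_vec n"
  shows "proj e *\<^sub>v q = cinner e q \<cdot>\<^sub>v e"
  using e q
  by (intro eq_vecI) (auto simp: proj_def scalar_prod_def cinner_carrier[of _ n] sum_distrib_left ac_simps
      atLeast0LessThan)

lemma cinner_proj: assumes e: "e \<in> carrier_vec n" and q: "q \<in> carrier_vec n"
  shows "cinner q (proj e *\<^sub>v q) = complex_of_real ((cmod (cinner e q))\<^sup>2)"
proof -
  have "cinner q (proj e *\<^sub>v q) = cinner e q * cinner q e"
    by (simp add: proj_mult_vec[OF e q] cinner_smult_right)
  also have "cinner q e = cnj (cinner e q)" using cinner_swap[OF e q] .
  finally show ?thesis by (simp add: mult_cnj_sq)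
qed

lemma Mbound_aux:
  assumes "set es \<subseteq> carrier_vec n" and "length ss = length es" and "\<forall>s\<in>set ss. \<bar>s\<bar> \<le> 1"
    and q: "q \<in> carrier_vec n"
  shows "cmod (\<Sum>(s, e)\<leftarrow>zip ss es. complex_of_real s * cinner q (proj e *\<^sub>v q))
    \<le> (\<Sum>e\<leftarrow>es. (cmod (cinner e q))\<^sup>2)"
  using assms
proof (induction es arbitrary: ss)
  case Nil thus ?case by simp
next
  case (Cons e es ss)
  then obtain s ss' where ss: "ss = s # ss'" by (cases ss) auto
  have e: "e \<in> carrier_vec n" using Cons.prems by auto
  have s1: "\<bar>s\<bar> \<le> 1" using Cons.prems ss by auto
  have h1: "cmod (complex_of_real s * cinner q (proj e *\<^sub>v q)) \<le> (cmod (cinner e q))\<^sup>2"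
  proof -
    have "cmod (cinner q (proj e *\<^sub>v q)) = (cmod (cinner e q))\<^sup>2"
      using cinner_proj[OF e q] by (simp add: norm_power)
    thus ?thesis using s1 by (simp add: norm_mult mult_left_le_one_le)
  qed
  have h2: "cmod (\<Sum>(s, e)\<leftarrow>zip ss' es. complex_of_real s * cinner q (proj e *\<^sub>v q))
    \<le> (\<Sum>e\<leftarrow>es. (cmod (cinner e q))\<^sup>2)"
    using Cons.IH[of ss'] Cons.prems ss by auto
  show ?case unfolding ss using norm_triangle_le[OF add_mono[OF h1 h2]] by simp
qed

lemma orthonormal_carrier: "orthonormal n es \<Longrightarrow> set es \<subseteq> carrier_vec n"
  by (induction es) auto

lemma Mbound:
  assumes on: "orthonormal n es" and ls: "length ss = length es" and sb: "\<forall>s\<in>set ss. \<bar>s\<bar> \<le> 1"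
    and q: "q \<in> carrier_vec n" and q1: "cinner q q = 1"
  shows "cmod (\<Sum>(s, e)\<leftarrow>zip ss es. complex_of_real s * cinner q (proj e *\<^sub>v q)) \<le> 1"
  using Mbound_aux[OF orthonormal_carrier[OF on] ls sb q] bessel[OF on q] q1 by simp


section \<open>Kronecker products\<close>

lemma sum_prod_idx: "(\<Sum>i<a * b. f i) = (\<Sum>x<a. \<Sum>y<b. f (x * b + y :: nat))"
proof -
  have "(\<Sum>i<a * b. f i) = (\<Sum>x<a. sum f {x * b..<x * b + b})"
    by (rule sum.nat_group[symmetric])
  also have "\<dots> = (\<Sum>x<a. \<Sum>y<b. f (x * b + y))"
  proof (rule sum.cong[OF refl])
    fix x
    have "sum f {0 + x * b..<b + x * b} = sum (\<lambda>y. f (y + x * b)) {0..<b}"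
      by (rule sum.shift_bounds_nat_ivl)
    thus "sum f {x * b..<x * b + b} = (\<Sum>y<b. f (x * b + y))"
      by (simp add: atLeast0LessThan add.commute)
  qed
  finally show ?thesis .
qed

lemma divmod_aux[simp]: "y < (b::nat) \<Longrightarrow> (x * b + y) div b = x" "y < (b::nat) \<Longrightarrow> (x * b + y) mod b = y"
  by auto

lemma divmod_bound: "i < a * (b::nat) \<Longrightarrow> i div b < a" "i < a * (b::nat) \<Longrightarrow> i mod b < b"
proof -
  assume i: "i < a * b"
  hence b: "b > 0" by (cases b) auto
  show "i div b < a" using i b by (simp add: div_less_iff_less_mult)
  show "i mod b < b" using b by simp
qed

lemma kron_vec_dim[simp]: "dim_vec (kron_vec u v) = dim_vec u * dim_vec v"
  unfolding kron_vec_def by simp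

lemma kron_vec_index: "i < dim_vec u * dim_vec v \<Longrightarrow>
  kron_vec u v $ i = u $ (i div dim_vec v) * v $ (i mod dim_vec v)"
  unfolding kron_vec_def by simp

lemma cinner_kron: assumes "dim_vec u' = dim_vec u" "dim_vec v' = dim_vec v"
  shows "cinner (kron_vec u v) (kron_vec u' v') = cinner u u' * cinner v v'"
proof -
  let ?a = "dim_vec u" and ?b = "dim_vec v"
  have "cinner (kron_vec u v) (kron_vec u' v') =
    (\<Sum>i<?a * ?b. cnj (u $ (i div ?b) * v $ (i mod ?b)) * (u' $ (i div ?b) * v' $ (i mod ?b)))"
    unfolding cinner_def using assms by (auto simp: kron_vec_index intro!: sum.cong)
  also have "\<dots> = (\<Sum>x<?a. \<Sum>y<?b. cnj (u $ x * v $ y) * (u' $ x * v' $ y))"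
    by (subst sum_prod_idx) (auto intro!: sum.cong)
  also have "\<dots> = cinner u u' * cinner v v'"
    unfolding cinner_def using assms by (simp add: sum_product ac_simps)
  finally show ?thesis .
qed

lemma kron_mat_dim[simp]: "dim_row (kron_mat A B) = dim_row A * dim_row B"
  "dim_col (kron_mat A B) = dim_col A * dim_col B"
  unfolding kron_mat_def by auto

lemma proj_dim[simp]: "dim_row (proj v) = dim_vec v" "dim_col (proj v) = dim_vec v"
  unfolding proj_def by auto

lemma kron_proj: "kron_mat (proj u) (proj v) = proj (kron_vec u v)"
  by (rule eq_matI) (auto simp: kron_mat_def proj_def kron_vec_index divmod_bound)

fun kron_vecs :: "complex vec list \<Rightarrow> complex vec" where
  "kron_vecs [] = vec 1 (\<lambda>_. 1)"
| "kron_vecs (x # xs) = kron_vec x (kron_vecs xs)"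

lemma kron_mats_proj: "kron_mats (map proj xs) = proj (kron_vecs xs)"
proof (induction xs)
  case Nil show ?case by (rule eq_matI) (auto simp: proj_def)
next
  case (Cons x xs) thus ?case by (simp add: kron_proj)
qed

lemma kron_vecs_dim: "(\<forall>x\<in>set xs. dim_vec x = m) \<Longrightarrow> dim_vec (kron_vecs xs) = m ^ length xs"
  by (induction xs) auto

lemma cinner_kron_vecs: "list_all2 (\<lambda>x y. dim_vec y = dim_vec x) xs ys \<Longrightarrow>
  cinner (kron_vecs xs) (kron_vecs ys) = (\<Prod>(x, y)\<leftarrow>zip xs ys. cinner x y)"
proof (induction xs arbitrary: ys)
  case Nil thus ?case by (simp add: cinner_def)
next
  case (Cons x xs ys)
  then obtain y ys' where ys: "ys = y # ys'" and dy: "dim_vec y = dim_vec x"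
    and r: "list_all2 (\<lambda>x y. dim_vec y = dim_vec x) xs ys'" by (cases ys) auto
  have dd: "dim_vec (kron_vecs ys') = dim_vec (kron_vecs xs)"
    using r by (induction xs ys' rule: list_all2_induct) auto
  show ?case unfolding ys using Cons.IH[OF r] dy dd by (simp add: cinner_kron)
qed

lemma proj_mult_aux: assumes U: "U \<in> carrier_mat n n" and x: "x \<in> carrier_vec n" and i: "i < n" and j: "j < n"
  shows "(mat n n (\<lambda>(i, b). y $ i * cnj (x $ b)) * mat_adjoint U) $$ (i, j) = y $ i * cnj ((U *\<^sub>v x) $ j)"
  using U x i j by (simp add: scalar_prod_def sum_distrib_left ac_simps)

lemma proj_mult: assumes U: "U \<in> carrier_mat n n" and x: "x \<in> carrier_vec n"
  shows "U * proj x * mat_adjoint U = proj (U *\<^sub>v x)"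
proof -
  have Ux: "U * proj x = mat n n (\<lambda>(i, b). (U *\<^sub>v x) $ i * cnj (x $ b))"
    using U x by (intro eq_matI) (auto simp: proj_def scalar_prod_def sum_distrib_right mult.assoc)
  show ?thesis
    unfolding Ux
  proof (rule eq_matI)
    fix i j assume "i < dim_row (proj (U *\<^sub>v x))" "j < dim_col (proj (U *\<^sub>v x))"
    hence i: "i < n" and j: "j < n" using U by auto
    show "(mat n n (\<lambda>(i, b). (U *\<^sub>v x) $ i * cnj (x $ b)) * mat_adjoint U) $$ (i, j) = proj (U *\<^sub>v x) $$ (i, j)"
      unfolding proj_mult_aux[OF U x i j] using U i j by (simp add: proj_def)
  qed (use U in auto)
qed

lemma mtrace_proj: assumes M: "M \<in> carrier_mat m m" and x: "x \<in> carrier_vec m"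
  shows "mtrace (M * proj x) = cinner x (M *\<^sub>v x)"
  unfolding mtrace_def cinner_def using M x
  by (auto simp: proj_def scalar_prod_def sum_distrib_left ac_simps atLeast0LessThan intro!: sum.cong)

lemma length_filter_neq: "l \<in> {1..n+1} \<Longrightarrow> length (filter (\<lambda>i. i \<noteq> l) [1..<n+2]) = n"
proof -
  assume l: "l \<in> {1..n+1}"
  have "length (filter (\<lambda>i. i \<noteq> l) [1..<n+2]) = card ({x. x \<noteq> l} \<inter> set [1..<n+2])"
    by (rule distinct_length_filter) simp
  also have "{x. x \<noteq> l} \<inter> set [1..<n+2] = {1..<n+2} - {l}" by auto
  also have "card \<dots> = n" using l by (simp add: card_Diff_singleton)
  finally show ?thesis .
qed


section \<open>PSD Cauchy-Schwarz and fidelity bound\<close>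

lemma psdD: assumes "psd n M"
  shows "M \<in> carrier_mat n n" "mat_adjoint M = M"
    "\<And>v. v \<in> carrier_vec n \<Longrightarrow> cinner v (M *\<^sub>v v) = complex_of_real (Re (cinner v (M *\<^sub>v v)))"
    "\<And>v. v \<in> carrier_vec n \<Longrightarrow> 0 \<le> Re (cinner v (M *\<^sub>v v))"
  using assms unfolding psd_def by (auto simp: complex_eq_iff Reals_def)

lemma herm_swap: assumes M: "M \<in> carrier_mat n n" and h: "mat_adjoint M = M"
  and x: "x \<in> carrier_vec n" and y: "y \<in> carrier_vec n"
  shows "cinner y (M *\<^sub>v x) = cnj (cinner x (M *\<^sub>v y))"
proof -
  have "cinner y (M *\<^sub>v x) = cinner (M *\<^sub>v y) x" using cinner_mat_vec[OF M y x] h by simp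
  also have "\<dots> = cnj (cinner x (M *\<^sub>v y))" using cinner_swap[OF x] M y by auto
  finally show ?thesis .
qed

lemma quad_expand: assumes M: "M \<in> carrier_mat n n" and x: "x \<in> carrier_vec n" and y: "y \<in> carrier_vec n"
  shows "cinner (x + t \<cdot>\<^sub>v y) (M *\<^sub>v (x + t \<cdot>\<^sub>v y)) =
    cinner x (M *\<^sub>v x) + t * cinner x (M *\<^sub>v y) + cnj t * cinner y (M *\<^sub>v x) + cnj t * t * cinner y (M *\<^sub>v y)"
proof -
  have Mxy: "M *\<^sub>v (x + t \<cdot>\<^sub>v y) = M *\<^sub>v x + t \<cdot>\<^sub>v (M *\<^sub>v y)"
    using M x y by (simp add: mult_add_distrib_mat_vec mult_mat_vec)
  have c1: "M *\<^sub>v x \<in> carrier_vec n" "M *\<^sub>v y \<in> carrier_vec n" using M x y by auto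
  show ?thesis unfolding Mxy using x y c1
    by (simp add: cinner_add_left[of _ n] cinner_add_right[of _ n] cinner_smult_left[of _ n]
        cinner_smult_right algebra_simps)
qed

lemma psd_cs: assumes P: "psd n M" and x: "x \<in> carrier_vec n" and y: "y \<in> carrier_vec n"
  shows "(cmod (cinner x (M *\<^sub>v y)))\<^sup>2 \<le> Re (cinner x (M *\<^sub>v x)) * Re (cinner y (M *\<^sub>v y))"
proof -
  note Pd = psdD[OF P]
  define a where "a = Re (cinner x (M *\<^sub>v x))"
  define b where "b = Re (cinner y (M *\<^sub>v y))"
  define m where "m = cinner x (M *\<^sub>v y)"
  have a0: "a \<ge> 0" and b0: "b \<ge> 0" unfolding a_def b_def using Pd(4) x y by auto
  have key: "0 \<le> a - 2 * r * (cmod m)\<^sup>2 + r\<^sup>2 * (cmod m)\<^sup>2 * b" for r :: real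
  proof -
    define t where "t = - complex_of_real r * cnj m"
    have z: "x + t \<cdot>\<^sub>v y \<in> carrier_vec n" using x y by auto
    have "cinner (x + t \<cdot>\<^sub>v y) (M *\<^sub>v (x + t \<cdot>\<^sub>v y)) =
      cinner x (M *\<^sub>v x) + t * m + cnj t * cnj m + cnj t * t * cinner y (M *\<^sub>v y)"
      unfolding quad_expand[OF Pd(1) x y] m_def herm_swap[OF Pd(1) Pd(2) x y] ..
    also have "t * m = - complex_of_real (r * (cmod m)\<^sup>2)"
      unfolding t_def by (simp add: cnj_mult_sq mult.assoc)
    also have "cnj t * cnj m = - complex_of_real (r * (cmod m)\<^sup>2)"
      unfolding t_def by (simp add: mult_cnj_sq mult.assoc)
    also have "cnj t * t = complex_of_real (r\<^sup>2 * (cmod m)\<^sup>2)"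
      unfolding t_def by (simp add: mult_cnj_sq power2_eq_square algebra_simps)
    finally have "Re (cinner (x + t \<cdot>\<^sub>v y) (M *\<^sub>v (x + t \<cdot>\<^sub>v y))) =
        Re (cinner x (M *\<^sub>v x) - complex_of_real (r * (cmod m)\<^sup>2) - complex_of_real (r * (cmod m)\<^sup>2)
          + complex_of_real (r\<^sup>2 * (cmod m)\<^sup>2) * cinner y (M *\<^sub>v y))" by simp
    hence "Re (cinner (x + t \<cdot>\<^sub>v y) (M *\<^sub>v (x + t \<cdot>\<^sub>v y))) = a - 2 * r * (cmod m)\<^sup>2 + r\<^sup>2 * (cmod m)\<^sup>2 * b"
      unfolding a_def b_def by simp
    thus ?thesis using Pd(4)[OF z] by simp
  qed
  show ?thesis
  proof (cases "b = 0")
    case True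
    show ?thesis
    proof (rule ccontr)
      assume "\<not> ?thesis"
      hence mpos: "(cmod m)\<^sup>2 > 0" using True m_def by (simp add: a_def b_def)
      have "0 \<le> a - 2 * ((a + 1) / (cmod m)\<^sup>2) * (cmod m)\<^sup>2" using key[of "(a + 1) / (cmod m)\<^sup>2"] True by simp
      thus False using mpos a0 by simp
    qed
  next
    case False
    hence bpos: "b > 0" using b0 by simp
    have "0 \<le> a - 2 * (1 / b) * (cmod m)\<^sup>2 + (1 / b)\<^sup>2 * (cmod m)\<^sup>2 * b" using key[of "1 / b"] .
    also have "\<dots> = a - (cmod m)\<^sup>2 / b" using bpos by (simp add: power2_eq_square field_simps)
    finally have "(cmod m)\<^sup>2 / b \<le> a" by simp
    hence "(cmod m)\<^sup>2 \<le> a * b" using bpos by (simp add: divide_le_eq)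
    thus ?thesis unfolding m_def a_def b_def .
  qed
qed

lemma real_fid:
  fixes T a b M R :: real
  assumes T: "0 \<le> T" "T \<le> 1" and a: "0 \<le> a" "a \<le> 1" and b: "0 \<le> b" "b \<le> T"
    and M0: "0 \<le> M" and M1: "M\<^sup>2 \<le> a * b" and M2: "M\<^sup>2 \<le> (1 - a) * (T - b)"
    and R: "\<bar>R\<bar> \<le> sqrt (1 - T) * M"
  shows "\<bar>b - T * a + 2 * R\<bar> \<le> sqrt T"
proof (cases "T = 0")
  case True
  hence "b = 0" using b by simp
  hence "M\<^sup>2 \<le> 0" using M2 True by simp
  hence "M = 0" using M0 by simp
  thus ?thesis using R \<open>b = 0\<close> True by simp
next
  case False
  hence Tpos: "T > 0" using T by simp
  define X where "X = \<bar>b - T * a\<bar>"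
  define s where "s = sqrt (1 - T)"
  have s0: "s \<ge> 0" and ss: "s\<^sup>2 = 1 - T" unfolding s_def using T by auto
  have main: "X\<^sup>2 + T * (2 * M)\<^sup>2 \<le> T\<^sup>2"
  proof (cases "b + T * a \<le> T")
    case True
    have "X\<^sup>2 + T * (2 * M)\<^sup>2 \<le> (b - T * a)\<^sup>2 + 4 * T * (a * b)"
      unfolding X_def using M1 Tpos by (simp add: power2_eq_square)
    also have "\<dots> = (b + T * a)\<^sup>2" by (simp add: power2_eq_square algebra_simps)
    also have "\<dots> \<le> T\<^sup>2" using True b a T by (intro power_mono) auto
    finally show ?thesis .
  next
    case False
    have "X\<^sup>2 + T * (2 * M)\<^sup>2 \<le> (b - T * a)\<^sup>2 + 4 * T * ((1 - a) * (T - b))"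
      unfolding X_def using M2 Tpos by (simp add: power2_eq_square)
    also have "\<dots> = (2 * T - T * a - b)\<^sup>2" by (simp add: power2_eq_square algebra_simps)
    also have "\<dots> \<le> T\<^sup>2"
    proof (rule power_mono)
      show "2 * T - T * a - b \<le> T" using False by simp
      have "T * a \<le> T" using a Tpos by (simp add: mult_left_le)
      thus "0 \<le> 2 * T - T * a - b" using b by simp
    qed
    finally show ?thesis .
  qed
  have cs: "(X + s * (2 * M))\<^sup>2 \<le> (X\<^sup>2 / T + (2 * M)\<^sup>2) * (T + s\<^sup>2)"
  proof -
    have "(X\<^sup>2 / T + (2 * M)\<^sup>2) * (T + s\<^sup>2) - (X + s * (2 * M))\<^sup>2 = (X * s - T * (2 * M))\<^sup>2 / T"
      using Tpos by (simp add: power2_eq_square field_simps)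
    also have "\<dots> \<ge> 0" using Tpos by simp
    finally show ?thesis by simp
  qed
  also have "\<dots> = X\<^sup>2 / T + (2 * M)\<^sup>2" using ss by simp
  also have "\<dots> \<le> T"
  proof -
    have "X\<^sup>2 / T + (2 * M)\<^sup>2 = (X\<^sup>2 + T * (2 * M)\<^sup>2) / T" using Tpos by (simp add: field_simps)
    also have "\<dots> \<le> T\<^sup>2 / T" using main Tpos by (simp add: divide_right_mono)
    also have "\<dots> = T" by (simp add: power2_eq_square)
    finally show ?thesis .
  qed
  finally have "(X + s * (2 * M))\<^sup>2 \<le> T" .
  hence "X + s * (2 * M) \<le> sqrt T"
    using real_le_rsqrt by blast
  moreover have "\<bar>b - T * a + 2 * R\<bar> \<le> X + 2 * \<bar>R\<bar>" unfolding X_def by simp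
  moreover have "2 * \<bar>R\<bar> \<le> s * (2 * M)" using R unfolding s_def by simp
  ultimately show ?thesis by simp
qed

theorem fidelity_bound:
  assumes E: "effect n \<mu>" and x: "x \<in> carrier_vec n" and y: "y \<in> carrier_vec n"
    and x1: "cinner x x = 1" and y1: "cinner y y = 1"
  shows "\<bar>Re (cinner y (\<mu> *\<^sub>v y)) - Re (cinner x (\<mu> *\<^sub>v x))\<bar> \<le> sqrt (1 - (cmod (cinner x y))\<^sup>2)"
proof -
  have P: "psd n \<mu>" and Q: "psd n (1\<^sub>m n - \<mu>)" using E unfolding effect_def by auto
  note Pd = psdD[OF P] and Qd = psdD[OF Q]
  have mu: "\<mu> \<in> carrier_mat n n" using Pd by simp
  have nu_apply: "v \<in> carrier_vec n \<Longrightarrow> (1\<^sub>m n - \<mu>) *\<^sub>v v = v - \<mu> *\<^sub>v v" for v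
    by (subst minus_mult_distrib_mat_vec[of _ n n]) (use mu in auto)
  define c where "c = cinner x y"
  define z where "z = y - c \<cdot>\<^sub>v x"
  have z: "z \<in> carrier_vec n" unfolding z_def using x y by auto
  have muc: "\<mu> *\<^sub>v x \<in> carrier_vec n" "\<mu> *\<^sub>v z \<in> carrier_vec n" using mu x z by auto
  have xz: "cinner x z = 0" unfolding z_def c_def using x y x1
    by (simp add: cinner_minus_right[of _ n] cinner_smult_right)
  have zx: "cinner z x = 0" using cinner_swap[OF x z] xz by simp
  have yx: "cinner y x = cnj c" unfolding c_def using cinner_swap[OF x y] by simp
  have yz: "y = c \<cdot>\<^sub>v x + z" unfolding z_def using x y by auto
  define T where "T = Re (cinner z z)"
  have zz: "cinner z z = 1 - cnj c * c"
  proof -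
    have "cinner z z = cinner y y - cnj c * cinner x y - c * cinner y x + cnj c * c * cinner x x"
      unfolding z_def using x y
      by (simp add: cinner_minus_left[of _ n] cinner_minus_right[of _ n] cinner_smult_left[of _ n]
          cinner_smult_right algebra_simps)
    thus ?thesis unfolding yx c_def[symmetric] x1 y1 by simp
  qed
  have Tc: "T = 1 - (cmod c)\<^sup>2" unfolding T_def zz by (simp add: cnj_mult_sq)
  define a where "a = Re (cinner x (\<mu> *\<^sub>v x))"
  define b where "b = Re (cinner z (\<mu> *\<^sub>v z))"
  define m where "m = cinner x (\<mu> *\<^sub>v z)"
  have a0: "0 \<le> a" unfolding a_def using Pd(4)[OF x] .
  have a1: "a \<le> 1"
  proof -
    have "0 \<le> Re (cinner x ((1\<^sub>m n - \<mu>) *\<^sub>v x))" using Qd(4)[OF x] .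
    also have "cinner x ((1\<^sub>m n - \<mu>) *\<^sub>v x) = 1 - cinner x (\<mu> *\<^sub>v x)"
      using x1 x muc by (simp add: nu_apply cinner_minus_right[of _ n])
    finally show ?thesis unfolding a_def by simp
  qed
  have b0: "0 \<le> b" unfolding b_def using Pd(4)[OF z] .
  have bT: "b \<le> T"
  proof -
    have "0 \<le> Re (cinner z ((1\<^sub>m n - \<mu>) *\<^sub>v z))" using Qd(4)[OF z] .
    also have "cinner z ((1\<^sub>m n - \<mu>) *\<^sub>v z) = cinner z z - cinner z (\<mu> *\<^sub>v z)"
      using z muc by (simp add: nu_apply cinner_minus_right[of _ n])
    finally show ?thesis unfolding b_def T_def by simp
  qed
  have M1: "(cmod m)\<^sup>2 \<le> a * b" unfolding m_def a_def b_def by (rule psd_cs[OF P x z])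
  have M2: "(cmod m)\<^sup>2 \<le> (1 - a) * (T - b)"
  proof -
    have "(cmod (cinner x ((1\<^sub>m n - \<mu>) *\<^sub>v z)))\<^sup>2 \<le>
        Re (cinner x ((1\<^sub>m n - \<mu>) *\<^sub>v x)) * Re (cinner z ((1\<^sub>m n - \<mu>) *\<^sub>v z))"
      by (rule psd_cs[OF Q x z])
    moreover have "cinner x ((1\<^sub>m n - \<mu>) *\<^sub>v z) = - m"
      unfolding m_def using z muc xz by (simp add: nu_apply cinner_minus_right[of _ n])
    moreover have "cinner x ((1\<^sub>m n - \<mu>) *\<^sub>v x) = 1 - cinner x (\<mu> *\<^sub>v x)"
      using x1 x muc by (simp add: nu_apply cinner_minus_right[of _ n])
    moreover have "cinner z ((1\<^sub>m n - \<mu>) *\<^sub>v z) = cinner z z - cinner z (\<mu> *\<^sub>v z)"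
      using z muc by (simp add: nu_apply cinner_minus_right[of _ n])
    ultimately show ?thesis unfolding a_def b_def T_def by simp
  qed
  have T0: "0 \<le> T" unfolding T_def using cinner_self_ge0 by simp
  have T1: "T \<le> 1" unfolding Tc by simp
  define R where "R = Re (cnj c * m)"
  have Rb: "\<bar>R\<bar> \<le> sqrt (1 - T) * cmod m"
  proof -
    have "\<bar>R\<bar> \<le> cmod (cnj c * m)" unfolding R_def by (rule abs_Re_le_cmod)
    also have "\<dots> = cmod c * cmod m" by (simp add: norm_mult)
    also have "cmod c = sqrt (1 - T)" unfolding Tc by simp
    finally show ?thesis .
  qed
  have yy: "Re (cinner y (\<mu> *\<^sub>v y)) = (cmod c)\<^sup>2 * a + 2 * R + b"
  proof -
    have "cinner y (\<mu> *\<^sub>v y) = cinner (z + c \<cdot>\<^sub>v x) (\<mu> *\<^sub>v (z + c \<cdot>\<^sub>v x))"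
      unfolding yz using comm_add_vec[of "c \<cdot>\<^sub>v x" n z] x z by simp
    also have "\<dots> = cinner z (\<mu> *\<^sub>v z) + c * cinner z (\<mu> *\<^sub>v x) + cnj c * m + cnj c * c * cinner x (\<mu> *\<^sub>v x)"
      unfolding quad_expand[OF mu z x] m_def ..
    also have "cinner z (\<mu> *\<^sub>v x) = cnj m" unfolding m_def using herm_swap[OF mu Pd(2) x z] .
    finally have "cinner y (\<mu> *\<^sub>v y) = cinner z (\<mu> *\<^sub>v z) + c * cnj m + cnj c * m + cnj c * c * cinner x (\<mu> *\<^sub>v x)" .
    hence "Re (cinner y (\<mu> *\<^sub>v y)) = b + Re (c * cnj m) + Re (cnj c * m) + (cmod c)\<^sup>2 * a"
      unfolding a_def b_def
      by (simp add: cnj_mult_sq)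
    moreover have "Re (c * cnj m) = R" unfolding R_def by simp
    ultimately show ?thesis by simp
  qed
  have "\<bar>b - T * a + 2 * R\<bar> \<le> sqrt T"
    by (rule real_fid[OF T0 T1 a0 a1 b0 bT _ M1 M2 Rb]) simp
  moreover have "Re (cinner y (\<mu> *\<^sub>v y)) - Re (cinner x (\<mu> *\<^sub>v x)) = b - T * a + 2 * R"
    unfolding yy a_def[symmetric] Tc by (simp add: algebra_simps)
  ultimately show ?thesis unfolding Tc c_def by simp
qed


section \<open>The phase attack operator\<close>

lemma kron_one: "kron_mat (1\<^sub>m a) (1\<^sub>m b) = 1\<^sub>m (a * b)"
proof (rule eq_matI)
  fix i j assume "i < dim_row (1\<^sub>m (a * b))" "j < dim_col (1\<^sub>m (a * b))"
  hence i: "i < a * b" and j: "j < a * b" by auto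
  have "(i div b = j div b \<and> i mod b = j mod b) \<longleftrightarrow> i = j"
    by (metis div_mult_mod_eq)
  thus "kron_mat (1\<^sub>m a) (1\<^sub>m b) $$ (i, j) = 1\<^sub>m (a * b) $$ (i, j)"
    using i j by (auto simp: kron_mat_def divmod_bound)
qed auto

lemma kron_mat_pow_one: "kron_mat_pow (1\<^sub>m 2) n = 1\<^sub>m (2 ^ n)"
  by (induction n) (auto simp: kron_one mult.commute)

definition ph :: "real \<Rightarrow> nat \<Rightarrow> complex" where
  "ph a i = (if i mod 2 = 0 then 1 else exp (\<i> * complex_of_real a))"

lemma A_alpha_carrier: "k \<ge> 1 \<Longrightarrow> A_alpha k a \<in> carrier_mat (2 ^ k) (2 ^ k)"
proof -
  assume k: "k \<ge> 1"
  have "(2::nat) ^ (k - 1) * 2 = 2 ^ k" using k by (metis Suc_diff_le diff_Suc_1 power_Suc2)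
  thus ?thesis unfolding A_alpha_def kron_mat_pow_one phase_gate_def
    by (auto simp: mat_of_rows_list_def)
qed

lemma phase_gate_index: assumes "x < 2" "y < 2"
  shows "phase_gate a $$ (x, y) = (if x = y then (if x = 0 then 1 else exp (\<i> * complex_of_real a)) else 0)"
  using assms unfolding phase_gate_def mat_of_rows_list_def
  by (cases x; cases y) (auto simp: less_2_cases_iff)

lemma A_alpha_index: assumes k: "k \<ge> 1" and i: "i < 2 ^ k" and j: "j < 2 ^ k"
  shows "A_alpha k a $$ (i, j) = (if i = j then ph a i else 0)"
proof -
  have e: "(2::nat) ^ (k - 1) * 2 = 2 ^ k" using k by (metis Suc_diff_le diff_Suc_1 power_Suc2)
  have i': "i div 2 < 2 ^ (k - 1)" and j': "j div 2 < 2 ^ (k - 1)" using i j e by auto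
  have pg: "dim_row (phase_gate a) = 2" "dim_col (phase_gate a) = 2"
    unfolding phase_gate_def mat_of_rows_list_def by auto
  have "A_alpha k a $$ (i, j) = 1\<^sub>m (2 ^ (k - 1)) $$ (i div 2, j div 2) * phase_gate a $$ (i mod 2, j mod 2)"
    unfolding A_alpha_def kron_mat_pow_one kron_mat_def using i j e pg by simp
  also have "\<dots> = (if i div 2 = j div 2 then 1 else 0) *
      (if i mod 2 = j mod 2 then (if i mod 2 = 0 then 1 else exp (\<i> * complex_of_real a)) else 0)"
    using i' j' by (simp add: phase_gate_index)
  also have "\<dots> = (if i = j then ph a i else 0)"
  proof -
    have "(i div 2 = j div 2 \<and> i mod 2 = j mod 2) \<longleftrightarrow> i = j"
      by (metis div_mult_mod_eq)
    thus ?thesis unfolding ph_def by auto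
  qed
  finally show ?thesis .
qed

lemma A_alpha_vec: assumes k: "k \<ge> 1" and u: "u \<in> carrier_vec (2 ^ k)"
  shows "A_alpha k a *\<^sub>v u = vec (2 ^ k) (\<lambda>i. ph a i * u $ i)"
proof (rule eq_vecI)
  fix i assume "i < dim_vec (vec (2 ^ k) (\<lambda>i. ph a i * u $ i))"
  hence i: "i < 2 ^ k" by simp
  have A: "A_alpha k a \<in> carrier_mat (2 ^ k) (2 ^ k)" using A_alpha_carrier[OF k] .
  have "(A_alpha k a *\<^sub>v u) $ i = row (A_alpha k a) i \<bullet> u" using A i by simp
  also have "\<dots> = (\<Sum>j\<in>{0..<2 ^ k}. A_alpha k a $$ (i, j) * u $ j)"
    using A u i by (simp add: scalar_prod_def)
  also have "\<dots> = (\<Sum>j\<in>{0..<2 ^ k}. (if i = j then ph a i * u $ j else 0))"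
    by (rule sum.cong[OF refl]) (use i in \<open>auto simp: A_alpha_index[OF k]\<close>)
  also have "\<dots> = ph a i * u $ i" using i by simp
  finally show "(A_alpha k a *\<^sub>v u) $ i = vec (2 ^ k) (\<lambda>i. ph a i * u $ i) $ i" using i by simp
qed (use A_alpha_carrier[OF k] in auto)

lemma ph_unit: "cnj (ph a i) * ph a i = 1"
proof -
  have "cnj (exp (\<i> * complex_of_real a)) * exp (\<i> * complex_of_real a) = 1"
    by (simp flip: cis_conv_exp add: cis_cnj cis_mult)
  thus ?thesis by (simp add: ph_def)
qed

lemma A_alpha_unitary: assumes k: "k \<ge> 1" shows "unitary_mat (2 ^ k) (A_alpha k a)"
proof -
  have A: "A_alpha k a \<in> carrier_mat (2 ^ k) (2 ^ k)" using A_alpha_carrier[OF k] .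
  have "mat_adjoint (A_alpha k a) * A_alpha k a = 1\<^sub>m (2 ^ k)"
  proof (rule eq_matI)
    fix i j assume "i < dim_row (1\<^sub>m (2 ^ k))" "j < dim_col (1\<^sub>m (2 ^ k))"
    hence i: "i < 2 ^ k" and j: "j < 2 ^ k" by auto
    have "(mat_adjoint (A_alpha k a) * A_alpha k a) $$ (i, j) =
        (\<Sum>l\<in>{0..<2 ^ k}. cnj (A_alpha k a $$ (l, i)) * A_alpha k a $$ (l, j))"
      using A i j by (auto simp: scalar_prod_def intro!: sum.cong)
    also have "\<dots> = (\<Sum>l\<in>{0..<2 ^ k}. (if l = i then cnj (ph a i) * (if i = j then ph a i else 0) else 0))"
    proof (rule sum.cong[OF refl])
      fix l :: nat assume "l \<in> {0..<2 ^ k}" hence l: "l < 2 ^ k" by simp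
      show "cnj (A_alpha k a $$ (l, i)) * A_alpha k a $$ (l, j) =
          (if l = i then cnj (ph a i) * (if i = j then ph a i else 0) else 0)"
        unfolding A_alpha_index[OF k l i] A_alpha_index[OF k l j] by auto
    qed
    also have "\<dots> = cnj (ph a i) * (if i = j then ph a i else 0)" using i by (simp add: sum.delta)
    also have "\<dots> = 1\<^sub>m (2 ^ k) $$ (i, j)" using i j by (simp add: ph_unit)
    finally show "(mat_adjoint (A_alpha k a) * A_alpha k a) $$ (i, j) = 1\<^sub>m (2 ^ k) $$ (i, j)" .
  qed (use A in auto)
  thus ?thesis using A unfolding unitary_mat_def by auto
qed

lemma overlap_bound: assumes k: "k \<ge> 1" and u: "u \<in> carrier_vec (2 ^ k)" and u1: "cinner u u = 1"
  shows "(1 + cos a) / 2 \<le> (cmod (cinner u (A_alpha k a *\<^sub>v u)))\<^sup>2"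
proof -
  define X where "X = (\<Sum>i<2 ^ k. if i mod 2 = 0 then (cmod (u $ i))\<^sup>2 else 0)"
  define Y where "Y = (\<Sum>i<2 ^ k. if i mod 2 = 0 then 0 else (cmod (u $ i))\<^sup>2)"
  have X0: "X \<ge> 0" and Y0: "Y \<ge> 0" unfolding X_def Y_def by (auto intro!: sum_nonneg)
  have XY: "X + Y = 1"
  proof -
    have "X + Y = (\<Sum>i<2 ^ k. (cmod (u $ i))\<^sup>2)" unfolding X_def Y_def sum.distrib[symmetric]
      by (rule sum.cong) auto
    also have "complex_of_real \<dots> = cinner u u" using cinner_self_real[of u] u by simp
    finally show ?thesis using u1 by (metis of_real_eq_1_iff)
  qed
  have "cinner u (A_alpha k a *\<^sub>v u) = (\<Sum>i<2 ^ k. cnj (u $ i) * (ph a i * u $ i))"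
    unfolding A_alpha_vec[OF k u] cinner_def by simp
  also have "\<dots> = (\<Sum>i<2 ^ k. complex_of_real (if i mod 2 = 0 then (cmod (u $ i))\<^sup>2 else 0)
      + exp (\<i> * complex_of_real a) * complex_of_real (if i mod 2 = 0 then 0 else (cmod (u $ i))\<^sup>2))"
    by (rule sum.cong) (auto simp: ph_def cnj_mult_sq mult_cnj_sq)
  also have "\<dots> = complex_of_real X + exp (\<i> * complex_of_real a) * complex_of_real Y"
    unfolding X_def Y_def by (simp add: sum.distrib sum_distrib_left)
  finally have eq: "cinner u (A_alpha k a *\<^sub>v u) = complex_of_real X + cis a * complex_of_real Y"
    by (simp add: cis_conv_exp)
  have "(cmod (cinner u (A_alpha k a *\<^sub>v u)))\<^sup>2 = (X + Y * cos a)\<^sup>2 + (Y * sin a)\<^sup>2"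
    unfolding eq cmod_power2 by (simp add: mult.commute)
  also have "\<dots> = (X + Y)\<^sup>2 - 2 * X * Y * (1 - cos a)"
  proof -
    have h: "(Y * sin a)\<^sup>2 = Y\<^sup>2 - (Y * cos a)\<^sup>2"
      by (simp add: power_mult_distrib sin_squared_eq algebra_simps)
    show ?thesis unfolding h by (simp add: power2_eq_square algebra_simps)
  qed
  also have "\<dots> \<ge> (1 + cos a) / 2"
  proof -
    have "4 * (X * Y) \<le> (X + Y)\<^sup>2" using sum_squares_ge_zero[of "X - Y" 0]
      by (simp add: power2_eq_square algebra_simps)
    hence "X * Y \<le> 1 / 4" using XY by simp
    moreover have "0 \<le> 1 - cos a" by simp
    ultimately have P: "X * Y * (1 - cos a) \<le> 1 / 4 * (1 - cos a)" by (rule mult_right_mono)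
    have eq2: "(X + Y)\<^sup>2 - 2 * X * Y * (1 - cos a) = 1 - 2 * (X * Y * (1 - cos a))" using XY by simp
    define t where "t = X * Y * (1 - cos a)"
    have "t \<le> 1 / 4 * (1 - cos a)" using P unfolding t_def .
    hence "(1 + cos a) / 2 \<le> 1 - 2 * t" by simp
    thus ?thesis unfolding eq2 t_def .
  qed
  finally show ?thesis .
qed


lemma mtrace_add: "X \<in> carrier_mat n n \<Longrightarrow> Y \<in> carrier_mat n n \<Longrightarrow> mtrace (X + Y) = mtrace X + mtrace Y"
  unfolding mtrace_def by (simp add: sum.distrib)

lemma mtrace_smult: "X \<in> carrier_mat n n \<Longrightarrow> mtrace (c \<cdot>\<^sub>m X) = c * mtrace X"
  unfolding mtrace_def by (simp add: sum_distrib_left)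

lemma mtrace_Aproj: assumes A: "A \<in> carrier_mat n n" and e: "e \<in> carrier_vec n"
  shows "mtrace (A * (c \<cdot>\<^sub>m proj e)) = c * cinner e (A *\<^sub>v e)"
proof -
  have "A * (c \<cdot>\<^sub>m proj e) = c \<cdot>\<^sub>m (A * proj e)" using A e by (simp add: mult_smult_distrib[of _ n n _ n])
  thus ?thesis using mtrace_proj[OF A e] A e by (simp add: mtrace_smult[of _ n])
qed

lemma proj_herm: "mat_adjoint (proj x) = proj x"
  by (rule eq_matI) (auto simp: proj_def)

lemma smult_proj_herm: "Im c = 0 \<Longrightarrow> mat_adjoint (c \<cdot>\<^sub>m proj x) = c \<cdot>\<^sub>m proj x"
proof -
  assume "Im c = 0" hence "cnj c = c" by (simp add: complex_eq_iff)
  thus ?thesis by (simp add: adj_smult proj_herm)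
qed

lemma exp_smult_proj: assumes x: "x \<in> carrier_vec n" and e: "e \<in> carrier_vec n"
  shows "cinner e ((c \<cdot>\<^sub>m proj x) *\<^sub>v e) = c * complex_of_real ((cmod (cinner x e))\<^sup>2)"
  using cinner_proj[OF x e] x e by (simp add: smult_mat_vec[of _ n n] cinner_smult_right)

section \<open>Two-dimensional vectors\<close>

lemma cinner2: "cinner (vec_of_list [a, b]) (vec_of_list [c, d]) = cnj a * c + cnj b * d"
  unfolding cinner_def by (simp add: numeral_2_eq_2 lessThan_Suc)

definition q1 :: "real \<Rightarrow> complex vec" where
  "q1 \<beta> = vec_of_list [complex_of_real (1 / sqrt 2), \<i> * cis \<beta> / complex_of_real (sqrt 2)]"

definition q2 :: "real \<Rightarrow> complex vec" where
  "q2 \<beta> = vec_of_list [complex_of_real (1 / sqrt 2), - \<i> * cis \<beta> / complex_of_real (sqrt 2)]"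

lemma ket_plus_alt: "ket_plus = vec_of_list [complex_of_real (1 / sqrt 2), complex_of_real (1 / sqrt 2)]"
  unfolding ket_plus_def by simp

lemma ket_plus_alpha_alt: "ket_plus_alpha a = vec_of_list [complex_of_real (1 / sqrt 2), cis a / complex_of_real (sqrt 2)]"
  unfolding ket_plus_alpha_def by (simp add: cis_conv_exp)

lemma dims2[simp]: "dim_vec ket_plus = 2" "dim_vec (ket_plus_alpha a) = 2" "dim_vec (q1 \<beta>) = 2" "dim_vec (q2 \<beta>) = 2"
  unfolding ket_plus_def ket_plus_alpha_def q1_def q2_def by auto

lemma half_sq: "complex_of_real (1 / sqrt 2) * complex_of_real (1 / sqrt 2) = 1 / 2"
proof -
  have "(1 / sqrt 2) * (1 / sqrt (2::real)) = 1 / 2" by (simp add: field_simps)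
  hence "complex_of_real ((1 / sqrt 2) * (1 / sqrt 2)) = 1 / 2" by simp
  thus ?thesis by (simp only: of_real_mult)
qed

lemma cis_cnj_mult: "cnj (cis b) * cis b = 1"
  by (simp add: cis_cnj cis_mult)

lemma inner_plus: "cinner ket_plus ket_plus = 1"
  unfolding ket_plus_alt cinner2 using half_sq by simp

lemma inner_plus_alpha: "cinner (ket_plus_alpha a) (ket_plus_alpha a) = 1"
proof -
  have "cinner (ket_plus_alpha a) (ket_plus_alpha a) = 1 / 2 + cnj (cis a) * cis a * (1 / 2)"
    unfolding ket_plus_alpha_alt cinner2 using half_sq by (simp add: field_simps)
  thus ?thesis by (simp add: cis_cnj_mult)
qed

lemma inner_q: "cinner (q1 b) (q1 b) = 1" "cinner (q2 b) (q2 b) = 1"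
  "cinner (q1 b) (q2 b) = 0" "cinner (q2 b) (q1 b) = 0"
proof -
  have h: "cnj (cis b) * cis b = 1" by (rule cis_cnj_mult)
  show "cinner (q1 b) (q1 b) = 1" unfolding q1_def cinner2 using half_sq h by (simp add: field_simps)
  show "cinner (q2 b) (q2 b) = 1" unfolding q2_def cinner2 using half_sq h by (simp add: field_simps)
  show "cinner (q1 b) (q2 b) = 0" unfolding q1_def q2_def cinner2 using half_sq h by (simp add: field_simps)
  show "cinner (q2 b) (q1 b) = 0" unfolding q1_def q2_def cinner2 using half_sq h by (simp add: field_simps)
qed

lemma circ_aux: fixes s c :: real assumes "s\<^sup>2 + c\<^sup>2 = 1"
  shows "((1 + s) / 2)\<^sup>2 + (c / 2)\<^sup>2 = (1 + s) / 2" "((1 - s) / 2)\<^sup>2 + (c / 2)\<^sup>2 = (1 - s) / 2"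
proof -
  have "((1 + s) / 2)\<^sup>2 + (c / 2)\<^sup>2 = (1 + 2 * s + (s\<^sup>2 + c\<^sup>2)) / 4" by (simp add: power2_eq_square field_simps)
  also have "\<dots> = (1 + s) / 2" using assms by simp
  finally show "((1 + s) / 2)\<^sup>2 + (c / 2)\<^sup>2 = (1 + s) / 2" .
  have "((1 - s) / 2)\<^sup>2 + (c / 2)\<^sup>2 = (1 - 2 * s + (s\<^sup>2 + c\<^sup>2)) / 4" by (simp add: power2_eq_square field_simps)
  also have "\<dots> = (1 - s) / 2" using assms by simp
  finally show "((1 - s) / 2)\<^sup>2 + (c / 2)\<^sup>2 = (1 - s) / 2" .
qed

lemma inner_q_plus: "(cmod (cinner (q1 b) ket_plus))\<^sup>2 = (1 - sin b) / 2"
  "(cmod (cinner (q2 b) ket_plus))\<^sup>2 = (1 + sin b) / 2"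
  "(cmod (cinner (q1 b) (ket_plus_alpha (2 * b))))\<^sup>2 = (1 + sin b) / 2"
  "(cmod (cinner (q2 b) (ket_plus_alpha (2 * b))))\<^sup>2 = (1 - sin b) / 2"
proof -
  have sc: "cos b * cos b = 1 - sin b * sin b" using sin_cos_squared_add[of b] by (simp add: power2_eq_square)
  have c2: "cis (2 * b) = cis b * cis b" by (simp add: cis_mult)
  have e1: "cinner (q1 b) ket_plus = (1 - \<i> * cnj (cis b)) / 2"
    unfolding q1_def ket_plus_alt cinner2 using half_sq by (simp add: field_simps)
  have e2: "cinner (q2 b) ket_plus = (1 + \<i> * cnj (cis b)) / 2"
    unfolding q2_def ket_plus_alt cinner2 using half_sq by (simp add: field_simps)
  have e3: "cinner (q1 b) (ket_plus_alpha (2 * b)) = (1 - \<i> * cis b) / 2"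
  proof -
    have "cinner (q1 b) (ket_plus_alpha (2 * b)) = (1 - \<i> * (cnj (cis b) * cis b) * cis b) / 2"
      unfolding q1_def ket_plus_alpha_alt cinner2 c2 using half_sq by (simp add: field_simps)
    thus ?thesis by (simp add: cis_cnj_mult)
  qed
  have e4: "cinner (q2 b) (ket_plus_alpha (2 * b)) = (1 + \<i> * cis b) / 2"
  proof -
    have "cinner (q2 b) (ket_plus_alpha (2 * b)) = (1 + \<i> * (cnj (cis b) * cis b) * cis b) / 2"
      unfolding q2_def ket_plus_alpha_alt cinner2 c2 using half_sq by (simp add: field_simps)
    thus ?thesis by (simp add: cis_cnj_mult)
  qed
  show "(cmod (cinner (q1 b) ket_plus))\<^sup>2 = (1 - sin b) / 2"
  proof -
    have "Re ((1 - \<i> * cnj (cis b)) / 2) = (1 - sin b) / 2" "Im ((1 - \<i> * cnj (cis b)) / 2) = - cos b / 2"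
      by simp_all
    thus ?thesis unfolding e1 cmod_power2 using circ_aux(2)[of "sin b" "- cos b"] by simp
  qed
  show "(cmod (cinner (q2 b) ket_plus))\<^sup>2 = (1 + sin b) / 2"
  proof -
    have "Re ((1 + \<i> * cnj (cis b)) / 2) = (1 + sin b) / 2" "Im ((1 + \<i> * cnj (cis b)) / 2) = cos b / 2"
      by simp_all
    thus ?thesis unfolding e2 cmod_power2 using circ_aux(1)[of "sin b" "cos b"] by simp
  qed
  show "(cmod (cinner (q1 b) (ket_plus_alpha (2 * b))))\<^sup>2 = (1 + sin b) / 2"
  proof -
    have "Re ((1 - \<i> * cis b) / 2) = (1 + sin b) / 2" "Im ((1 - \<i> * cis b) / 2) = - cos b / 2"
      by simp_all
    thus ?thesis unfolding e3 cmod_power2 using circ_aux(1)[of "sin b" "- cos b"] by simp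
  qed
  show "(cmod (cinner (q2 b) (ket_plus_alpha (2 * b))))\<^sup>2 = (1 - sin b) / 2"
  proof -
    have "Re ((1 + \<i> * cis b) / 2) = (1 - sin b) / 2" "Im ((1 + \<i> * cis b) / 2) = cos b / 2"
      by simp_all
    thus ?thesis unfolding e4 cmod_power2 using circ_aux(2)[of "sin b" "cos b"] by simp
  qed
qed


lemma embed_dim[simp]: "dim_vec (embed v) = dim_vec v + 1"
  unfolding embed_def by simp

lemma cinner_embed: "dim_vec u = dim_vec v \<Longrightarrow> cinner (embed u) (embed v) = cinner u v"
  unfolding cinner_def embed_def by (simp add: lessThan_Suc)

lemma cinner_embed_bot: "cinner (embed u) (unit_vec (dim_vec u + 1) (dim_vec u)) = 0"
  "cinner (unit_vec (dim_vec u + 1) (dim_vec u)) (embed u) = 0"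
  unfolding cinner_def embed_def by (auto simp: lessThan_Suc unit_vec_def intro!: sum.neutral)

lemma cinner_unit_self: "j < n \<Longrightarrow> cinner (unit_vec n j) (unit_vec n j) = 1"
  unfolding cinner_def unit_vec_def by (simp add: if_distrib[of "\<lambda>x. _ * x"] cong: if_cong)

lemma kvp_dim[simp]: "dim_vec (kron_vec_pow ket_plus n) = 2 ^ n"
  by (induction n) auto

lemma kvp_inner: "cinner (kron_vec_pow ket_plus n) (kron_vec_pow ket_plus n) = 1"
proof (induction n)
  case 0 thus ?case by (simp add: cinner_def)
next
  case (Suc n) thus ?case by (simp only: kron_vec_pow.simps cinner_kron[OF refl refl] inner_plus) simp
qed

definition EV :: "nat \<Rightarrow> complex vec \<Rightarrow> complex vec" where
  "EV k x = embed (kron_vec (kron_vec_pow ket_plus (k - 1)) x)"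

lemma two_pow_k: "k \<ge> 1 \<Longrightarrow> (2::nat) ^ (k - 1) * 2 = 2 ^ k"
  by (metis Suc_diff_le diff_Suc_1 power_Suc2)

lemma EV_carrier: assumes k: "k \<ge> 1" and x: "dim_vec x = 2" shows "EV k x \<in> carrier_vec (2 ^ k + 1)"
proof -
  have "dim_vec (EV k x) = 2 ^ k + 1" unfolding EV_def using two_pow_k[OF k] x by simp
  thus ?thesis by (rule carrier_vecI)
qed

lemma EV_inner: "dim_vec x = 2 \<Longrightarrow> dim_vec y = 2 \<Longrightarrow> cinner (EV k x) (EV k y) = cinner x y"
  unfolding EV_def by (simp add: cinner_embed cinner_kron kvp_inner)

lemma EV_bot: assumes k: "k \<ge> 1" and x: "dim_vec x = 2"
  shows "cinner (EV k x) (ket_bot k) = 0" "cinner (ket_bot k) (EV k x) = 0"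
proof -
  have d: "dim_vec (kron_vec (kron_vec_pow ket_plus (k - 1)) x) = 2 ^ k" using two_pow_k[OF k] x by simp
  show "cinner (EV k x) (ket_bot k) = 0" "cinner (ket_bot k) (EV k x) = 0"
    unfolding EV_def ket_bot_def using cinner_embed_bot[of "kron_vec (kron_vec_pow ket_plus (k - 1)) x"] d
    by auto
qed

lemma bot_carrier: "ket_bot k \<in> carrier_vec (2 ^ k + 1)" unfolding ket_bot_def by simp

lemma bot_inner: "cinner (ket_bot k) (ket_bot k) = 1" unfolding ket_bot_def by (simp add: cinner_unit_self)

lemma plus_k_EV: "k \<ge> 1 \<Longrightarrow> plus_k k = EV k ket_plus"
  unfolding plus_k_def EV_def by (metis Suc_diff_le diff_Suc_1 kron_vec_pow.simps(2))

lemma plus_k_alpha_EV: "plus_k_alpha k a = EV k (ket_plus_alpha a)"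
  unfolding plus_k_alpha_def EV_def ..

lemma exp_proj: "x \<in> carrier_vec n \<Longrightarrow> e \<in> carrier_vec n \<Longrightarrow>
  cinner e (proj x *\<^sub>v e) = complex_of_real ((cmod (cinner x e))\<^sup>2)"
  by (rule cinner_proj)

lemma exp_combo:
  assumes c: "x1 \<in> carrier_vec n" "x2 \<in> carrier_vec n" "x3 \<in> carrier_vec n" "x4 \<in> carrier_vec n"
    and e: "e \<in> carrier_vec n"
  shows "cinner e ((c1 \<cdot>\<^sub>m proj x1 + c2 \<cdot>\<^sub>m proj x2 - (c3 \<cdot>\<^sub>m proj x3 + c4 \<cdot>\<^sub>m proj x4)) *\<^sub>v e) =
    c1 * complex_of_real ((cmod (cinner x1 e))\<^sup>2) + c2 * complex_of_real ((cmod (cinner x2 e))\<^sup>2)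
    - c3 * complex_of_real ((cmod (cinner x3 e))\<^sup>2) - c4 * complex_of_real ((cmod (cinner x4 e))\<^sup>2)"
proof -
  have pc: "proj x1 \<in> carrier_mat n n" "proj x2 \<in> carrier_mat n n" "proj x3 \<in> carrier_mat n n" "proj x4 \<in> carrier_mat n n"
    using c by auto
  have mv: "(c1 \<cdot>\<^sub>m proj x1 + c2 \<cdot>\<^sub>m proj x2 - (c3 \<cdot>\<^sub>m proj x3 + c4 \<cdot>\<^sub>m proj x4)) *\<^sub>v e =
     (c1 \<cdot>\<^sub>m proj x1) *\<^sub>v e + (c2 \<cdot>\<^sub>m proj x2) *\<^sub>v e - ((c3 \<cdot>\<^sub>m proj x3) *\<^sub>v e + (c4 \<cdot>\<^sub>m proj x4) *\<^sub>v e)"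
    using pc e by (simp add: add_mult_distrib_mat_vec[of _ n n] minus_mult_distrib_mat_vec[of _ n n])
  have vc: "(c1 \<cdot>\<^sub>m proj x1) *\<^sub>v e \<in> carrier_vec n" "(c2 \<cdot>\<^sub>m proj x2) *\<^sub>v e \<in> carrier_vec n"
    "(c3 \<cdot>\<^sub>m proj x3) *\<^sub>v e \<in> carrier_vec n" "(c4 \<cdot>\<^sub>m proj x4) *\<^sub>v e \<in> carrier_vec n" using pc e by (auto intro!: mult_mat_vec_carrier smult_carrier_mat)
  show ?thesis unfolding mv using vc c e
    by (simp add: cinner_add_right[of _ n] cinner_minus_right[of _ n] exp_smult_proj[of _ n])
qed

lemma mtrace_M3:
  assumes A: "A \<in> carrier_mat n n" and e: "e1 \<in> carrier_vec n" "e2 \<in> carrier_vec n" "e3 \<in> carrier_vec n"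
  shows "mtrace (A * (s1 \<cdot>\<^sub>m proj e1 + s2 \<cdot>\<^sub>m proj e2 + s3 \<cdot>\<^sub>m proj e3)) =
    s1 * cinner e1 (A *\<^sub>v e1) + s2 * cinner e2 (A *\<^sub>v e2) + s3 * cinner e3 (A *\<^sub>v e3)"
proof -
  have pc: "s1 \<cdot>\<^sub>m proj e1 \<in> carrier_mat n n" "s2 \<cdot>\<^sub>m proj e2 \<in> carrier_mat n n" "s3 \<cdot>\<^sub>m proj e3 \<in> carrier_mat n n"
    using e by auto
  have eq: "A * (s1 \<cdot>\<^sub>m proj e1 + s2 \<cdot>\<^sub>m proj e2 + s3 \<cdot>\<^sub>m proj e3) =
      A * (s1 \<cdot>\<^sub>m proj e1) + A * (s2 \<cdot>\<^sub>m proj e2) + A * (s3 \<cdot>\<^sub>m proj e3)"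
    using A pc by (simp add: mult_add_distrib_mat[of _ n n] assoc_add_mat[of _ n n])
  have mc: "A * (s1 \<cdot>\<^sub>m proj e1) \<in> carrier_mat n n" "A * (s2 \<cdot>\<^sub>m proj e2) \<in> carrier_mat n n"
    "A * (s3 \<cdot>\<^sub>m proj e3) \<in> carrier_mat n n" using A pc by auto
  show ?thesis unfolding eq
    using mc e A by (simp add: mtrace_add[of _ n] mtrace_Aproj[of _ n])
qed

lemma M3_apply:
  assumes e: "e1 \<in> carrier_vec n" "e2 \<in> carrier_vec n" "e3 \<in> carrier_vec n" and q: "q \<in> carrier_vec n"
  shows "cinner q ((complex_of_real s1 \<cdot>\<^sub>m proj e1 + complex_of_real s2 \<cdot>\<^sub>m proj e2 + complex_of_real s3 \<cdot>\<^sub>m proj e3) *\<^sub>v q)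
    = (\<Sum>(s, e)\<leftarrow>zip [s1, s2, s3] [e1, e2, e3]. complex_of_real s * cinner q (proj e *\<^sub>v q))"
proof -
  have pc: "proj e1 \<in> carrier_mat n n" "proj e2 \<in> carrier_mat n n" "proj e3 \<in> carrier_mat n n" using e by auto
  have vc: "proj e1 *\<^sub>v q \<in> carrier_vec n" "proj e2 *\<^sub>v q \<in> carrier_vec n" "proj e3 *\<^sub>v q \<in> carrier_vec n"
    using pc q by auto
  show ?thesis using pc q vc
    by (simp add: add_mult_distrib_mat_vec[of _ n n] smult_mat_vec[of _ n n] cinner_add_right[of _ n]
        cinner_smult_right)
qed

lemma M3_bound:
  assumes on: "orthonormal n [e1, e2, e3]" and s: "\<bar>s1\<bar> \<le> 1" "\<bar>s2\<bar> \<le> 1" "\<bar>s3\<bar> \<le> 1"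
    and q: "q \<in> carrier_vec n" and q1: "cinner q q = 1"
  shows "cmod (cinner q ((complex_of_real s1 \<cdot>\<^sub>m proj e1 + complex_of_real s2 \<cdot>\<^sub>m proj e2 + complex_of_real s3 \<cdot>\<^sub>m proj e3) *\<^sub>v q)) \<le> 1"
proof -
  have e: "e1 \<in> carrier_vec n" "e2 \<in> carrier_vec n" "e3 \<in> carrier_vec n" using on by auto
  show ?thesis unfolding M3_apply[OF e q]
    by (rule Mbound[OF on _ _ q q1]) (use s in auto)
qed


lemma mtrace_M2:
  assumes A: "A \<in> carrier_mat n n" and e: "e1 \<in> carrier_vec n" "e2 \<in> carrier_vec n"
  shows "mtrace (A * (s1 \<cdot>\<^sub>m proj e1 + s2 \<cdot>\<^sub>m proj e2)) =
    s1 * cinner e1 (A *\<^sub>v e1) + s2 * cinner e2 (A *\<^sub>v e2)"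
proof -
  have pc: "s1 \<cdot>\<^sub>m proj e1 \<in> carrier_mat n n" "s2 \<cdot>\<^sub>m proj e2 \<in> carrier_mat n n"
    using e by auto
  have eq: "A * (s1 \<cdot>\<^sub>m proj e1 + s2 \<cdot>\<^sub>m proj e2) = A * (s1 \<cdot>\<^sub>m proj e1) + A * (s2 \<cdot>\<^sub>m proj e2)"
    using A pc by (simp add: mult_add_distrib_mat[of _ n n])
  have mc: "A * (s1 \<cdot>\<^sub>m proj e1) \<in> carrier_mat n n" "A * (s2 \<cdot>\<^sub>m proj e2) \<in> carrier_mat n n"
    using A pc by auto
  show ?thesis unfolding eq
    using mc e A by (simp add: mtrace_add[of _ n] mtrace_Aproj[of _ n])
qed

lemma M2_bound:
  assumes on: "orthonormal n [e1, e2]" and s: "\<bar>s1\<bar> \<le> 1" "\<bar>s2\<bar> \<le> 1"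
    and q: "q \<in> carrier_vec n" and q1: "cinner q q = 1"
  shows "cmod (cinner q ((complex_of_real s1 \<cdot>\<^sub>m proj e1 + complex_of_real s2 \<cdot>\<^sub>m proj e2) *\<^sub>v q)) \<le> 1"
proof -
  have e: "e1 \<in> carrier_vec n" "e2 \<in> carrier_vec n" using on by auto
  have pc: "proj e1 \<in> carrier_mat n n" "proj e2 \<in> carrier_mat n n" using e by auto
  have vc: "proj e1 *\<^sub>v q \<in> carrier_vec n" "proj e2 *\<^sub>v q \<in> carrier_vec n" using pc q by auto
  have "cinner q ((complex_of_real s1 \<cdot>\<^sub>m proj e1 + complex_of_real s2 \<cdot>\<^sub>m proj e2) *\<^sub>v q)
    = (\<Sum>(s, e)\<leftarrow>zip [s1, s2] [e1, e2]. complex_of_real s * cinner q (proj e *\<^sub>v q))"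
    using pc q vc
    by (simp add: add_mult_distrib_mat_vec[of _ n n] smult_mat_vec[of _ n n] cinner_add_right[of _ n]
        cinner_smult_right)
  also have "cmod \<dots> \<le> 1" by (rule Mbound[OF on _ _ q q1]) (use s in auto)
  finally show ?thesis .
qed

lemma herm_combo: "Im c1 = 0 \<Longrightarrow> Im c2 = 0 \<Longrightarrow> Im c3 = 0 \<Longrightarrow> Im c4 = 0 \<Longrightarrow>
  x1 \<in> carrier_vec n \<Longrightarrow> x2 \<in> carrier_vec n \<Longrightarrow> x3 \<in> carrier_vec n \<Longrightarrow> x4 \<in> carrier_vec n \<Longrightarrow>
  mat_adjoint (c1 \<cdot>\<^sub>m proj x1 + c2 \<cdot>\<^sub>m proj x2 - (c3 \<cdot>\<^sub>m proj x3 + c4 \<cdot>\<^sub>m proj x4)) =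
    c1 \<cdot>\<^sub>m proj x1 + c2 \<cdot>\<^sub>m proj x2 - (c3 \<cdot>\<^sub>m proj x3 + c4 \<cdot>\<^sub>m proj x4)"
  by (simp add: adj_minus[of _ n n] adj_add[of _ n n] smult_proj_herm)

theorem honest_bound:
  assumes v: "v \<in> carrier_vec N" and b: "b \<in> carrier_vec N" and on: "orthonormal N [b, v]"
  shows "\<bar>1 - h\<bar> \<le> trace_dist (complex_of_real h \<cdot>\<^sub>m proj v + (1 - complex_of_real h) \<cdot>\<^sub>m proj b) (proj v)"
proof -
  have bb: "cinner b b = 1" and vv: "cinner v v = 1" and bv: "cinner b v = 0" and vb: "cinner v b = 0"
    using on by auto
  have pv: "proj v = 1 \<cdot>\<^sub>m proj v + 0 \<cdot>\<^sub>m proj b" using v b by (intro eq_matI) auto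
  define A where "A = complex_of_real h \<cdot>\<^sub>m proj v + (1 - complex_of_real h) \<cdot>\<^sub>m proj b - (1 \<cdot>\<^sub>m proj v + 0 \<cdot>\<^sub>m proj b)"
  have A: "A \<in> carrier_mat N N" unfolding A_def using v b by auto
  have Ah: "mat_adjoint A = A" unfolding A_def by (rule herm_combo[OF _ _ _ _ v b v b]) auto
  define M where "M = complex_of_real 1 \<cdot>\<^sub>m proj b + complex_of_real (-1) \<cdot>\<^sub>m proj v"
  have M: "M \<in> carrier_mat N N" unfolding M_def using v b by auto
  have Mb: "\<And>q. q \<in> carrier_vec N \<Longrightarrow> cinner q q = 1 \<Longrightarrow> cmod (cinner q (M *\<^sub>v q)) \<le> 1"
    unfolding M_def by (rule M2_bound[OF on]) auto
  have tl: "cmod (mtrace (A * M)) \<le> trace_norm A" by (rule trace_norm_lower[OF A Ah M Mb])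
  have tr: "mtrace (A * M) = complex_of_real (2 * (1 - h))"
  proof -
    have "mtrace (A * M) = cinner b (A *\<^sub>v b) - cinner v (A *\<^sub>v v)"
      unfolding M_def using mtrace_M2[OF A b v] by simp
    also have "\<dots> = complex_of_real (2 * (1 - h))"
      unfolding A_def using v b bb vv bv vb
      by (simp add: exp_combo[of _ N] cinner_swap[of v N b] algebra_simps)
    finally show ?thesis .
  qed
  have "\<bar>2 * (1 - h)\<bar> \<le> trace_norm A" using tl unfolding tr norm_of_real .
  moreover have "\<bar>2 * (1 - h)\<bar> = 2 * \<bar>1 - h\<bar>" by (simp only: abs_mult)
  ultimately have "2 * \<bar>1 - h\<bar> \<le> trace_norm A" by linarith
  moreover have "trace_dist (complex_of_real h \<cdot>\<^sub>m proj v + (1 - complex_of_real h) \<cdot>\<^sub>m proj b) (proj v) = trace_norm A / 2"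
    unfolding trace_dist_def A_def pv[symmetric] ..
  ultimately show ?thesis by simp
qed

theorem secure_bound:
  assumes w: "w \<in> carrier_vec N" and v: "v \<in> carrier_vec N" and on: "orthonormal N [e1, e2, b]"
    and wb: "cinner w b = 0" and vb: "cinner v b = 0"
    and we1: "(cmod (cinner w e1))\<^sup>2 = (1 + S) / 2" and we2: "(cmod (cinner w e2))\<^sup>2 = (1 - S) / 2"
    and ve1: "(cmod (cinner v e1))\<^sup>2 = (1 - S) / 2" and ve2: "(cmod (cinner v e2))\<^sup>2 = (1 + S) / 2"
    and S: "0 \<le> S" "S \<le> 1"
  shows "d * S \<le> trace_dist (complex_of_real d \<cdot>\<^sub>m proj w + (1 - complex_of_real d) \<cdot>\<^sub>m proj b)
            (complex_of_real p \<cdot>\<^sub>m proj v + complex_of_real (1 - p) \<cdot>\<^sub>m proj b)"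
proof -
  have e1: "e1 \<in> carrier_vec N" and e2: "e2 \<in> carrier_vec N" and b: "b \<in> carrier_vec N"
    and bb: "cinner b b = 1" and be1: "cinner b e1 = 0" and be2: "cinner b e2 = 0"
    using on by auto
  define A where "A = complex_of_real d \<cdot>\<^sub>m proj w + (1 - complex_of_real d) \<cdot>\<^sub>m proj b -
     (complex_of_real p \<cdot>\<^sub>m proj v + complex_of_real (1 - p) \<cdot>\<^sub>m proj b)"
  have A: "A \<in> carrier_mat N N" unfolding A_def using w v b by auto
  have Ah: "mat_adjoint A = A" unfolding A_def by (rule herm_combo[OF _ _ _ _ w b v b]) auto
  define \<sigma> :: real where "\<sigma> = (if p \<ge> d then 1 else -1)"
  define M where "M = complex_of_real 1 \<cdot>\<^sub>m proj e1 + complex_of_real (-1) \<cdot>\<^sub>m proj e2 + complex_of_real \<sigma> \<cdot>\<^sub>m proj b"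
  have M: "M \<in> carrier_mat N N" unfolding M_def using e1 e2 b by auto
  have Mb: "\<And>q. q \<in> carrier_vec N \<Longrightarrow> cinner q q = 1 \<Longrightarrow> cmod (cinner q (M *\<^sub>v q)) \<le> 1"
    unfolding M_def by (rule M3_bound[OF on]) (auto simp: \<sigma>_def)
  have "cmod (mtrace (A * M)) \<le> trace_norm A" by (rule trace_norm_lower[OF A Ah M Mb])
  moreover have "mtrace (A * M) = complex_of_real ((d + p) * S + \<sigma> * (p - d))"
  proof -
    have "mtrace (A * M) = cinner e1 (A *\<^sub>v e1) - cinner e2 (A *\<^sub>v e2) + complex_of_real \<sigma> * cinner b (A *\<^sub>v b)"
      unfolding M_def using mtrace_M3[OF A e1 e2 b] by simp
    also have "cinner e1 (A *\<^sub>v e1) = complex_of_real (d * ((1 + S) / 2) - p * ((1 - S) / 2))"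
      unfolding A_def using w v b e1 be1 by (simp add: exp_combo[of _ N] we1 ve1)
    also have "cinner e2 (A *\<^sub>v e2) = complex_of_real (d * ((1 - S) / 2) - p * ((1 + S) / 2))"
      unfolding A_def using w v b e2 be2 by (simp add: exp_combo[of _ N] we2 ve2)
    also have "cinner b (A *\<^sub>v b) = complex_of_real (p - d)"
      unfolding A_def using w v b bb wb vb by (simp add: exp_combo[of _ N])
    also have "complex_of_real (d * ((1 + S) / 2) - p * ((1 - S) / 2)) - complex_of_real (d * ((1 - S) / 2) - p * ((1 + S) / 2))
        + complex_of_real \<sigma> * complex_of_real (p - d) =
      complex_of_real ((d * ((1 + S) / 2) - p * ((1 - S) / 2)) - (d * ((1 - S) / 2) - p * ((1 + S) / 2)) + \<sigma> * (p - d))"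
      by (simp only: of_real_diff of_real_add of_real_mult)
    also have "\<dots> = complex_of_real ((d + p) * S + \<sigma> * (p - d))"
      by (rule arg_cong[where f = complex_of_real]) (simp add: field_simps)
    finally show ?thesis .
  qed
  moreover have "2 * (d * S) \<le> (d + p) * S + \<sigma> * (p - d)"
  proof (cases "p \<ge> d")
    case True
    hence "0 \<le> (p - d) * S + (p - d)" using S by simp
    thus ?thesis using True by (simp add: \<sigma>_def algebra_simps)
  next
    case False
    hence "0 \<le> (d - p) * (1 - S)" using S by simp
    thus ?thesis using False by (simp add: \<sigma>_def algebra_simps)
  qed
  ultimately have "2 * (d * S) \<le> trace_norm A"
    by (metis (no_types, opaque_lifting) norm_of_real abs_ge_self order_trans)
  thus ?thesis unfolding trace_dist_def A_def by simp
qed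


section \<open>Acceptance probabilities\<close>

definition Lst :: "nat \<Rightarrow> nat \<Rightarrow> nat list" where
  "Lst n l = filter (\<lambda>i. i \<noteq> l) [1..<n+2]"

lemma set_Lst: "set (Lst n l) = {1..n+1} - {l}"
  unfolding Lst_def set_filter set_upt by auto

lemma length_Lst: "l \<in> {1..n+1} \<Longrightarrow> length (Lst n l) = n"
  unfolding Lst_def by (rule length_filter_neq)

definition Psi :: "(nat \<Rightarrow> nat \<Rightarrow> complex mat) \<Rightarrow> (nat \<Rightarrow> nat \<Rightarrow> complex vec) \<Rightarrow> nat \<Rightarrow> nat \<Rightarrow> complex vec" where
  "Psi TT chi n l = kron_vecs (map (\<lambda>i. TT n i *\<^sub>v chi n i) (Lst n l))"

lemma set_filter_L: "i \<in> set (Lst n l) \<Longrightarrow> i \<in> {1..n+1}"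
  unfolding set_Lst by auto

lemma Psi_carrier:
  assumes c: "\<And>i. i \<in> {1..n+1} \<Longrightarrow> TT n i \<in> carrier_mat d d \<and> chi n i \<in> carrier_vec d"
    and l: "l \<in> {1..n+1}"
  shows "Psi TT chi n l \<in> carrier_vec (d ^ n)"
proof -
  have "dim_vec (Psi TT chi n l) = d ^ length (map (\<lambda>i. TT n i *\<^sub>v chi n i) (Lst n l))"
    unfolding Psi_def
  proof (rule kron_vecs_dim, rule ballI)
    fix x assume "x \<in> set (map (\<lambda>i. TT n i *\<^sub>v chi n i) (Lst n l))"
    then obtain i where i: "i \<in> set (Lst n l)" and x: "x = TT n i *\<^sub>v chi n i" by auto
    show "dim_vec x = d" using c[OF set_filter_L[OF i]] x by auto
  qed
  also have "\<dots> = d ^ n" using length_Lst[OF l] by simp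
  finally show ?thesis by (rule carrier_vecI)
qed

lemma accept_eq:
  assumes c: "\<And>i. i \<in> {1..n+1} \<Longrightarrow> TT n i \<in> carrier_mat d d \<and> chi n i \<in> carrier_vec d"
    and l: "l \<in> {1..n+1}" and mu: "\<mu> n \<in> carrier_mat (d ^ n) (d ^ n)"
  shows "accept_prob \<mu> TT chi n l = cinner (Psi TT chi n l) (\<mu> n *\<^sub>v Psi TT chi n l)"
proof -
  have "map (\<lambda>i. TT n i * proj (chi n i) * mat_adjoint (TT n i)) (Lst n l) =
      map (\<lambda>i. proj (TT n i *\<^sub>v chi n i)) (Lst n l)"
  proof (rule map_cong[OF refl])
    fix i assume "i \<in> set (Lst n l)"
    hence "i \<in> {1..n+1}" by (rule set_filter_L)
    thus "TT n i * proj (chi n i) * mat_adjoint (TT n i) = proj (TT n i *\<^sub>v chi n i)"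
      using c by (auto intro: proj_mult)
  qed
  hence hmap: "map (\<lambda>i. TT n i * proj (chi n i) * mat_adjoint (TT n i)) (Lst n l) =
      map proj (map (\<lambda>i. TT n i *\<^sub>v chi n i) (Lst n l))" by simp
  have hk: "kron_mats (map (\<lambda>i. TT n i * proj (chi n i) * mat_adjoint (TT n i)) (Lst n l)) = proj (Psi TT chi n l)"
    unfolding hmap kron_mats_proj Psi_def ..
  show ?thesis unfolding accept_prob_def Lst_def[symmetric] hk
    using mtrace_proj[OF mu Psi_carrier[where TT=TT and chi=chi and n=n and d=d, OF c l]] by simp
qed

lemma cinner_kron_map: "(\<And>i. i \<in> set L \<Longrightarrow> dim_vec (g i) = dim_vec (f i)) \<Longrightarrow>
  cinner (kron_vecs (map f L)) (kron_vecs (map g L)) = (\<Prod>i\<leftarrow>L. cinner (f i) (g i))"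
proof (induction L)
  case Nil thus ?case by (simp add: cinner_def)
next
  case (Cons a L)
  have dd: "dim_vec (kron_vecs (map g L)) = dim_vec (kron_vecs (map f L))"
    using Cons.prems by (induction L) auto
  show ?case using Cons by (simp add: cinner_kron dd)
qed

lemma prod_cmod_bound: "(\<And>i. i \<in> set L \<Longrightarrow> c \<le> (cmod (z i))\<^sup>2) \<Longrightarrow> 0 \<le> c \<Longrightarrow>
  c ^ length L \<le> (cmod (\<Prod>i\<leftarrow>L. z i))\<^sup>2"
proof (induction L)
  case Nil thus ?case by simp
next
  case (Cons a L)
  have "c * c ^ length L \<le> (cmod (z a))\<^sup>2 * (cmod (\<Prod>i\<leftarrow>L. z i))\<^sup>2"
    using Cons by (intro mult_mono) auto
  thus ?case by (simp add: norm_mult power_mult_distrib)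
qed

lemma prob_bounds:
  assumes E: "effect m \<mu>" and x: "x \<in> carrier_vec m" and x1: "cinner x x = 1"
  shows "cinner x (\<mu> *\<^sub>v x) = complex_of_real (Re (cinner x (\<mu> *\<^sub>v x)))"
    "0 \<le> Re (cinner x (\<mu> *\<^sub>v x))" "Re (cinner x (\<mu> *\<^sub>v x)) \<le> 1"
proof -
  have P: "psd m \<mu>" and Q: "psd m (1\<^sub>m m - \<mu>)" using E unfolding effect_def by auto
  note Pd = psdD[OF P] and Qd = psdD[OF Q]
  show "cinner x (\<mu> *\<^sub>v x) = complex_of_real (Re (cinner x (\<mu> *\<^sub>v x)))" using Pd(3)[OF x] .
  show "0 \<le> Re (cinner x (\<mu> *\<^sub>v x))" using Pd(4)[OF x] .
  have "(1\<^sub>m m - \<mu>) *\<^sub>v x = x - \<mu> *\<^sub>v x"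
    by (subst minus_mult_distrib_mat_vec[of _ m m]) (use Pd(1) x in auto)
  hence "cinner x ((1\<^sub>m m - \<mu>) *\<^sub>v x) = 1 - cinner x (\<mu> *\<^sub>v x)"
    using x x1 Pd(1) by (simp add: cinner_minus_right[of _ m])
  thus "Re (cinner x (\<mu> *\<^sub>v x)) \<le> 1" using Qd(4)[OF x] by simp
qed

lemma Psi_unit:
  assumes u: "\<And>i. i \<in> {1..n+1} \<Longrightarrow> cinner (TT n i *\<^sub>v chi n i) (TT n i *\<^sub>v chi n i) = 1"
  shows "cinner (Psi TT chi n l) (Psi TT chi n l) = 1"
  unfolding Psi_def
  by (subst cinner_kron_map) (auto simp: u set_Lst intro!: prod_list_neutral)


lemma attacked_unitary: assumes k: "k \<ge> 1" and U: "unitary_mat (2 ^ k) U"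
  shows "unitary_mat (2 ^ k) (attacked k aa a U)"
  unfolding attacked_def using unitary_mult[OF A_alpha_unitary[OF k] U] unitary_mult[OF U A_alpha_unitary[OF k]]
  by auto

lemma unit_after_unitary: assumes U: "unitary_mat n U" and u: "u \<in> carrier_vec n" and u1: "cinner u u = 1"
  shows "cinner (U *\<^sub>v u) (U *\<^sub>v u) = 1"
  using unitary_inner[OF U u u] u1 by simp

lemma round_overlap: assumes k: "k \<ge> 1" and U: "unitary_mat (2 ^ k) U" and u: "u \<in> carrier_vec (2 ^ k)"
  and u1: "cinner u u = 1"
  shows "(1 + cos a) / 2 \<le> (cmod (cinner (U *\<^sub>v u) (attacked k aa a U *\<^sub>v u)))\<^sup>2"
proof -
  have Uc: "U \<in> carrier_mat (2 ^ k) (2 ^ k)" using U unfolding unitary_mat_def by auto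
  have Ac: "A_alpha k a \<in> carrier_mat (2 ^ k) (2 ^ k)" using A_alpha_carrier[OF k] .
  show ?thesis
  proof (cases aa)
    case True
    have "attacked k aa a U *\<^sub>v u = A_alpha k a *\<^sub>v (U *\<^sub>v u)"
      unfolding attacked_def using True Uc Ac u by (simp add: assoc_mult_mat_vec[of _ "2^k" "2^k" _ "2^k"])
    moreover have "U *\<^sub>v u \<in> carrier_vec (2 ^ k)" using Uc u by auto
    moreover have "cinner (U *\<^sub>v u) (U *\<^sub>v u) = 1" by (rule unit_after_unitary[OF U u u1])
    ultimately show ?thesis using overlap_bound[OF k] by simp
  next
    case False
    have "attacked k aa a U *\<^sub>v u = U *\<^sub>v (A_alpha k a *\<^sub>v u)"
      unfolding attacked_def using False Uc Ac u by (simp add: assoc_mult_mat_vec[of _ "2^k" "2^k" _ "2^k"])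
    moreover have "cinner (U *\<^sub>v u) (U *\<^sub>v (A_alpha k a *\<^sub>v u)) = cinner u (A_alpha k a *\<^sub>v u)"
      using unitary_inner[OF U u] Ac u by auto
    ultimately show ?thesis using overlap_bound[OF k u u1] by simp
  qed
qed

lemma sqrt_n_bound: assumes "N > 0" shows "sqrt (real n) \<le> (real n + N) / (2 * sqrt N)"
proof -
  have "0 \<le> (sqrt (real n) - sqrt N)\<^sup>2" by simp
  hence "2 * sqrt (real n) * sqrt N \<le> real n + N" using assms by (simp add: power2_eq_square algebra_simps)
  thus ?thesis using assms by (simp add: field_simps)
qed


lemma avg_real:
  assumes \<Omega>0: "\<And>n. \<Omega> n \<ge> 0" and \<Omega>s: "\<Omega> sums 1"
    and acc: "\<And>n l. l \<in> {1..n+1} \<Longrightarrow> accept_prob \<mu> TT chi n l = complex_of_real (r n l) \<and> 0 \<le> r n l \<and> r n l \<le> 1"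
  defines "g \<equiv> (\<lambda>n. \<Omega> n / real (n + 1) * (\<Sum>l = 1..n + 1. r n l))"
  shows "avg_accept \<Omega> \<mu> TT chi = complex_of_real (suminf g)" "summable g"
    "\<And>n. 0 \<le> g n" "\<And>n. g n \<le> \<Omega> n" "0 \<le> suminf g" "suminf g \<le> 1"
proof -
  have \<Omega>sum: "summable \<Omega>" and \<Omega>1: "suminf \<Omega> = 1" using \<Omega>s by (auto simp: sums_iff)
  show g0: "0 \<le> g n" for n
  proof -
    have s: "0 \<le> (\<Sum>l = 1..n + 1. r n l)" using acc by (intro sum_nonneg) auto
    show ?thesis unfolding g_def using \<Omega>0[of n] s by (intro mult_nonneg_nonneg divide_nonneg_nonneg) auto
  qed
  show g1: "g n \<le> \<Omega> n" for n
  proof -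
    have "(\<Sum>l = 1..n + 1. r n l) \<le> (\<Sum>l = 1..n + 1. 1)" using acc by (intro sum_mono) auto
    hence "(\<Sum>l = 1..n + 1. r n l) \<le> real (n + 1)" by simp
    hence "(\<Sum>l = 1..n + 1. r n l) / real (n + 1) \<le> 1" by (simp add: divide_le_eq)
    hence "\<Omega> n * ((\<Sum>l = 1..n + 1. r n l) / real (n + 1)) \<le> \<Omega> n * 1" using \<Omega>0 by (intro mult_left_mono) auto
    thus ?thesis unfolding g_def by (simp add: field_simps)
  qed
  show gs: "summable g"
    by (rule summable_comparison_test[OF _ \<Omega>sum]) (use g0 g1 in auto)
  show "0 \<le> suminf g" using g0 gs by (simp add: suminf_nonneg)
  show "suminf g \<le> 1" using suminf_le[OF g1 gs \<Omega>sum] \<Omega>1 by simp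
  have "avg_accept \<Omega> \<mu> TT chi = (\<Sum>n. complex_of_real (g n))"
    unfolding avg_accept_def g_def
  proof (rule arg_cong[where f = suminf], rule ext)
    fix n
    have "(\<Sum>l = 1..n + 1. accept_prob \<mu> TT chi n l) = (\<Sum>l = 1..n + 1. complex_of_real (r n l))"
      using acc by (intro sum.cong) auto
    thus "complex_of_real (\<Omega> n / real (n + 1)) * (\<Sum>l = 1..n + 1. accept_prob \<mu> TT chi n l) =
        complex_of_real (\<Omega> n / real (n + 1) * (\<Sum>l = 1..n + 1. r n l))" by simp
  qed
  also have "\<dots> = complex_of_real (suminf g)" by (rule suminf_of_real[OF gs, symmetric])
  finally show "avg_accept \<Omega> \<mu> TT chi = complex_of_real (suminf g)" .
qed

lemma cmod_cinner_swap: "dim_vec x = dim_vec y \<Longrightarrow> cmod (cinner x y) = cmod (cinner y x)"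
proof -
  assume d: "dim_vec x = dim_vec y"
  have "x \<in> carrier_vec (dim_vec x)" "y \<in> carrier_vec (dim_vec x)" using d by (auto intro: carrier_vecI)
  from cinner_swap[OF this] show ?thesis by simp
qed

theorem theorem2:
  fixes k :: nat and \<Omega> :: "nat \<Rightarrow> real"
    and T :: "nat \<Rightarrow> nat \<Rightarrow> complex mat" and chi :: "nat \<Rightarrow> nat \<Rightarrow> complex vec"
    and \<mu> :: "nat \<Rightarrow> complex mat"
    and attack_after :: bool and \<epsilon>H \<epsilon>D :: real
  assumes k: "k \<ge> 1"
    and \<Omega>_nonneg: "\<And>n. \<Omega> n \<ge> 0"
    and \<Omega>_prob: "\<Omega> sums 1"
    and finite_mean: "summable (\<lambda>n. real n * \<Omega> n)"
    and N_ge_1: "(\<Sum>n. real n * \<Omega> n) \<ge> 1"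
    and T_unitary: "\<And>n i. i \<in> {1..n + 1} \<Longrightarrow> unitary_mat (2 ^ k) (T n i)"
    and chi_unit: "\<And>n i. i \<in> {1..n + 1} \<Longrightarrow> unit_vector (2 ^ k) (chi n i)"
    and \<mu>_effect: "\<And>n. effect ((2 ^ k) ^ n) (\<mu> n)"
    and \<epsilon>H_nonneg: "\<epsilon>H \<ge> 0" and \<epsilon>D_nonneg: "\<epsilon>D \<ge> 0"
    and correct: "trace_dist (rho_H k \<Omega> \<mu> T chi) (proj (plus_k k)) \<le> \<epsilon>H"
    and secure: "\<And>a::real. \<exists>p\<in>{0..1::real}.
        trace_dist (rho_D k attack_after a \<Omega> \<mu> T chi)
          (complex_of_real p \<cdot>\<^sub>m proj (plus_k k) + complex_of_real (1 - p) \<cdot>\<^sub>m proj (ket_bot k))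
        \<le> \<epsilon>D"
  shows "\<epsilon>H + \<epsilon>D \<ge> 1 / (4 * sqrt (\<Sum>n. real n * \<Omega> n))"
proof -
  define Nm where "Nm = (\<Sum>n. real n * \<Omega> n)"
  have N1: "Nm \<ge> 1" using N_ge_1 unfolding Nm_def .
  have sN: "sqrt Nm \<ge> 1" using N1 by simp
  define S where "S = 1 / (2 * sqrt Nm)"
  have S0: "S > 0" and S2: "S \<le> 1 / 2" unfolding S_def using sN by (auto simp: field_simps)
  have Ssq: "S\<^sup>2 \<le> 1"
  proof -
    have "S * S \<le> 1" by (rule mult_le_one) (use S0 S2 in auto)
    thus ?thesis by (simp add: power2_eq_square)
  qed
  define \<beta> where "\<beta> = arcsin S"
  have sb: "sin \<beta> = S" unfolding \<beta>_def using S0 S2 by (intro sin_arcsin) auto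
  define \<alpha> where "\<alpha> = 2 * \<beta>"
  have ca: "(1 + cos \<alpha>) / 2 = 1 - S\<^sup>2" unfolding \<alpha>_def cos_double_sin sb by simp
  define TA where "TA = (\<lambda>n i. attacked k attack_after \<alpha> (T n i))"
  have Tc: "T n i \<in> carrier_mat (2 ^ k) (2 ^ k)" if "i \<in> {1..n + 1}" for n i
    using T_unitary[OF that] unfolding unitary_mat_def by auto
  have TAu: "unitary_mat (2 ^ k) (TA n i)" if "i \<in> {1..n + 1}" for n i
    unfolding TA_def by (rule attacked_unitary[OF k T_unitary[OF that]])
  have TAc: "TA n i \<in> carrier_mat (2 ^ k) (2 ^ k)" if "i \<in> {1..n + 1}" for n i
    using TAu[OF that] unfolding unitary_mat_def by auto
  have chic: "chi n i \<in> carrier_vec (2 ^ k)" and chi1: "cinner (chi n i) (chi n i) = 1"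
    if "i \<in> {1..n + 1}" for n i using chi_unit[OF that] unfolding unit_vector_def by auto
  have muc: "\<mu> n \<in> carrier_mat ((2 ^ k) ^ n) ((2 ^ k) ^ n)" for n
    using \<mu>_effect[of n] unfolding effect_def psd_def by auto
  define rH where "rH n l = Re (accept_prob \<mu> T chi n l)" for n l
  define rD where "rD n l = Re (accept_prob \<mu> TA chi n l)" for n l
  have cH: "\<And>i. i \<in> {1..n+1} \<Longrightarrow> T n i \<in> carrier_mat (2 ^ k) (2 ^ k) \<and> chi n i \<in> carrier_vec (2 ^ k)" for n
    using Tc chic by auto
  have cD: "\<And>i. i \<in> {1..n+1} \<Longrightarrow> TA n i \<in> carrier_mat (2 ^ k) (2 ^ k) \<and> chi n i \<in> carrier_vec (2 ^ k)" for n
    using TAc chic by auto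
  have PsiH: "Psi T chi n l \<in> carrier_vec ((2 ^ k) ^ n)" "cinner (Psi T chi n l) (Psi T chi n l) = 1"
    if l: "l \<in> {1..n+1}" for n l
  proof -
    show "Psi T chi n l \<in> carrier_vec ((2 ^ k) ^ n)" by (rule Psi_carrier[OF cH l])
    show "cinner (Psi T chi n l) (Psi T chi n l) = 1"
      by (rule Psi_unit) (use unit_after_unitary T_unitary chic chi1 in blast)
  qed
  have PsiD: "Psi TA chi n l \<in> carrier_vec ((2 ^ k) ^ n)" "cinner (Psi TA chi n l) (Psi TA chi n l) = 1"
    if l: "l \<in> {1..n+1}" for n l
  proof -
    show "Psi TA chi n l \<in> carrier_vec ((2 ^ k) ^ n)" by (rule Psi_carrier[OF cD l])
    show "cinner (Psi TA chi n l) (Psi TA chi n l) = 1"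
      by (rule Psi_unit) (use unit_after_unitary TAu chic chi1 in blast)
  qed
  have eqH: "accept_prob \<mu> T chi n l = cinner (Psi T chi n l) (\<mu> n *\<^sub>v Psi T chi n l)"
    if l: "l \<in> {1..n+1}" for n l
    by (rule accept_eq[where TT=T and chi=chi and n=n and d="2^k" and \<mu>=\<mu>, OF cH l muc])
  have eqD: "accept_prob \<mu> TA chi n l = cinner (Psi TA chi n l) (\<mu> n *\<^sub>v Psi TA chi n l)"
    if l: "l \<in> {1..n+1}" for n l
    by (rule accept_eq[where TT=TA and chi=chi and n=n and d="2^k" and \<mu>=\<mu>, OF cD l muc])
  have accH: "accept_prob \<mu> T chi n l = complex_of_real (rH n l) \<and> 0 \<le> rH n l \<and> rH n l \<le> 1"
    if l: "l \<in> {1..n+1}" for n l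
    unfolding rH_def eqH[OF l] using prob_bounds[OF \<mu>_effect PsiH[OF l]] by auto
  have accD: "accept_prob \<mu> TA chi n l = complex_of_real (rD n l) \<and> 0 \<le> rD n l \<and> rD n l \<le> 1"
    if l: "l \<in> {1..n+1}" for n l
    unfolding rD_def eqD[OF l] using prob_bounds[OF \<mu>_effect PsiD[OF l]] by auto
  have rdiff: "\<bar>rD n l - rH n l\<bar> \<le> sqrt (real n) * S" if l: "l \<in> {1..n+1}" for n l
  proof -
    have "\<bar>rD n l - rH n l\<bar> \<le> sqrt (1 - (cmod (cinner (Psi T chi n l) (Psi TA chi n l)))\<^sup>2)"
      unfolding rD_def rH_def eqH[OF l] eqD[OF l]
      by (rule fidelity_bound[OF \<mu>_effect PsiH(1)[OF l] PsiD(1)[OF l] PsiH(2)[OF l] PsiD(2)[OF l]])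
    also have "cinner (Psi T chi n l) (Psi TA chi n l) =
        (\<Prod>i\<leftarrow>Lst n l. cinner (T n i *\<^sub>v chi n i) (TA n i *\<^sub>v chi n i))"
      unfolding Psi_def
    proof (rule cinner_kron_map)
      fix i assume "i \<in> set (Lst n l)"
      hence i: "i \<in> {1..n+1}" by (rule set_filter_L)
      show "dim_vec (TA n i *\<^sub>v chi n i) = dim_vec (T n i *\<^sub>v chi n i)" using Tc[OF i] TAc[OF i] by simp
    qed
    also have "(1 - S\<^sup>2) ^ n \<le> (cmod (\<Prod>i\<leftarrow>Lst n l. cinner (T n i *\<^sub>v chi n i) (TA n i *\<^sub>v chi n i)))\<^sup>2"
    proof -
      have "(1 - S\<^sup>2) ^ length (Lst n l) \<le> (cmod (\<Prod>i\<leftarrow>Lst n l. cinner (T n i *\<^sub>v chi n i) (TA n i *\<^sub>v chi n i)))\<^sup>2"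
      proof (rule prod_cmod_bound)
        fix i assume "i \<in> set (Lst n l)"
        hence i: "i \<in> {1..n+1}" by (rule set_filter_L)
        show "1 - S\<^sup>2 \<le> (cmod (cinner (T n i *\<^sub>v chi n i) (TA n i *\<^sub>v chi n i)))\<^sup>2"
          unfolding TA_def ca[symmetric] by (rule round_overlap[OF k T_unitary[OF i] chic[OF i] chi1[OF i]])
      next
        show "0 \<le> 1 - S\<^sup>2" using Ssq by simp
      qed
      thus ?thesis using length_Lst[OF l] by simp
    qed
    hence "sqrt (1 - (cmod (\<Prod>i\<leftarrow>Lst n l. cinner (T n i *\<^sub>v chi n i) (TA n i *\<^sub>v chi n i)))\<^sup>2) \<le> sqrt (1 - (1 - S\<^sup>2) ^ n)"
      by simp
    also have "\<dots> \<le> sqrt (real n * S\<^sup>2)"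
    proof -
      have "1 + real n * (- S\<^sup>2) \<le> (1 + - S\<^sup>2) ^ n"
        by (rule bernoulli_inequality) (use Ssq in simp)
      thus ?thesis by simp
    qed
    also have "\<dots> = sqrt (real n) * S" using S0 by (simp add: real_sqrt_mult)
    finally show ?thesis .
  qed
  define gH where "gH = (\<lambda>n. \<Omega> n / real (n + 1) * (\<Sum>l = 1..n + 1. rH n l))"
  define gD where "gD = (\<lambda>n. \<Omega> n / real (n + 1) * (\<Sum>l = 1..n + 1. rD n l))"
  note AH = avg_real[OF \<Omega>_nonneg \<Omega>_prob accH, folded gH_def]
  note AD = avg_real[OF \<Omega>_nonneg \<Omega>_prob accD, folded gD_def]
  define hH where "hH = suminf gH"
  define hD where "hD = suminf gD"
  have \<Omega>sum: "summable \<Omega>" and \<Omega>1: "suminf \<Omega> = 1" using \<Omega>_prob by (auto simp: sums_iff)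
  define bb where "bb = (\<lambda>n. S / (2 * sqrt Nm) * (real n * \<Omega> n) + S * sqrt Nm / 2 * \<Omega> n)"
  have bbs: "summable bb" unfolding bb_def
    by (intro summable_add summable_mult finite_mean \<Omega>sum)
  have bbsum: "suminf bb = S * sqrt Nm"
  proof -
    have s1: "(\<Sum>n. S / (2 * sqrt Nm) * (real n * \<Omega> n)) = S / (2 * sqrt Nm) * Nm"
      unfolding Nm_def by (rule suminf_mult[OF finite_mean])
    have s2: "(\<Sum>n. S * sqrt Nm / 2 * \<Omega> n) = S * sqrt Nm / 2 * 1"
      using suminf_mult[OF \<Omega>sum, of "S * sqrt Nm / 2"] \<Omega>1 by simp
    have "suminf bb = (\<Sum>n. S / (2 * sqrt Nm) * (real n * \<Omega> n)) + (\<Sum>n. S * sqrt Nm / 2 * \<Omega> n)"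
      unfolding bb_def by (rule suminf_add[symmetric]) (auto intro!: summable_mult finite_mean \<Omega>sum)
    also have "\<dots> = S / (2 * sqrt Nm) * Nm + S * sqrt Nm / 2 * 1" unfolding s1 s2 ..
    finally have "suminf bb = S / (2 * sqrt Nm) * Nm + S * sqrt Nm / 2 * 1" .
    also have "\<dots> = S * sqrt Nm" using N1 by (simp add: field_simps real_sqrt_mult[symmetric])
    finally show ?thesis .
  qed
  have gdiff: "gH n - gD n \<le> bb n" for n
  proof -
    have "gH n - gD n = \<Omega> n / real (n + 1) * (\<Sum>l = 1..n + 1. rH n l - rD n l)"
      unfolding gH_def gD_def by (simp add: sum_subtractf right_diff_distrib)
    also have "\<dots> \<le> \<Omega> n / real (n + 1) * (\<Sum>l = 1..n + 1. sqrt (real n) * S)"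
      using rdiff \<Omega>_nonneg by (intro mult_left_mono sum_mono) (auto simp: abs_le_iff)
    also have "\<dots> = \<Omega> n * (sqrt (real n) * S)" by simp
    also have "\<dots> \<le> \<Omega> n * ((real n + Nm) / (2 * sqrt Nm) * S)"
      using sqrt_n_bound[of Nm n] N1 S0 \<Omega>_nonneg by (intro mult_left_mono mult_right_mono) auto
    also have "\<dots> = bb n" unfolding bb_def using N1 by (simp add: field_simps)
    finally show ?thesis .
  qed
  have hdiff: "hH - hD \<le> S * sqrt Nm"
  proof -
    have "hH - hD = (\<Sum>n. gH n - gD n)" unfolding hH_def hD_def using suminf_diff[OF AH(2) AD(2)] by simp
    also have "\<dots> \<le> suminf bb" by (rule suminf_le[OF gdiff summable_diff[OF AH(2) AD(2)] bbs])
    finally show ?thesis using bbsum by simp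
  qed
  have v: "plus_k k \<in> carrier_vec (2 ^ k + 1)" unfolding plus_k_EV[OF k] by (rule EV_carrier[OF k]) simp
  have b: "ket_bot k \<in> carrier_vec (2 ^ k + 1)" by (rule bot_carrier)
  have vv: "cinner (plus_k k) (plus_k k) = 1" unfolding plus_k_EV[OF k] by (simp add: EV_inner inner_plus)
  have vb: "cinner (plus_k k) (ket_bot k) = 0" "cinner (ket_bot k) (plus_k k) = 0"
    unfolding plus_k_EV[OF k] using EV_bot[OF k] by auto
  have H: "\<bar>1 - hH\<bar> \<le> \<epsilon>H"
  proof -
    have "\<bar>1 - hH\<bar> \<le> trace_dist (complex_of_real hH \<cdot>\<^sub>m proj (plus_k k) + (1 - complex_of_real hH) \<cdot>\<^sub>m proj (ket_bot k)) (proj (plus_k k))"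
      by (rule honest_bound[OF v b]) (use b v bot_inner vv vb in auto)
    also have "\<dots> = trace_dist (rho_H k \<Omega> \<mu> T chi) (proj (plus_k k))"
      using AH(1) unfolding rho_H_def Let_def hH_def by simp
    finally show ?thesis using correct by simp
  qed
  obtain p where p: "p \<in> {0..1}" and pD: "trace_dist (rho_D k attack_after \<alpha> \<Omega> \<mu> T chi)
          (complex_of_real p \<cdot>\<^sub>m proj (plus_k k) + complex_of_real (1 - p) \<cdot>\<^sub>m proj (ket_bot k)) \<le> \<epsilon>D"
    using secure[of \<alpha>] by auto
  have D: "hD * S \<le> \<epsilon>D"
  proof -
    let ?w = "plus_k_alpha k \<alpha>" and ?e1 = "EV k (q1 \<beta>)" and ?e2 = "EV k (q2 \<beta>)"
    have w: "?w \<in> carrier_vec (2 ^ k + 1)" unfolding plus_k_alpha_EV by (rule EV_carrier[OF k]) simp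
    have e1: "?e1 \<in> carrier_vec (2 ^ k + 1)" and e2: "?e2 \<in> carrier_vec (2 ^ k + 1)"
      by (rule EV_carrier[OF k], simp)+
    have on: "orthonormal (2 ^ k + 1) [?e1, ?e2, ket_bot k]"
      using e1 e2 b bot_inner EV_bot[OF k] by (simp add: EV_inner inner_q)
    have sw: "cmod (cinner ?w e) = cmod (cinner e ?w)" if "e \<in> carrier_vec (2 ^ k + 1)" for e
      using cinner_swap[OF that w] by simp
    have sv: "cmod (cinner (plus_k k) e) = cmod (cinner e (plus_k k))" if "e \<in> carrier_vec (2 ^ k + 1)" for e
      using cinner_swap[OF that v] by simp
    have "hD * S \<le> trace_dist (complex_of_real hD \<cdot>\<^sub>m proj ?w + (1 - complex_of_real hD) \<cdot>\<^sub>m proj (ket_bot k))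
          (complex_of_real p \<cdot>\<^sub>m proj (plus_k k) + complex_of_real (1 - p) \<cdot>\<^sub>m proj (ket_bot k))"
    proof (rule secure_bound[OF w v on])
      show "cinner ?w (ket_bot k) = 0" unfolding plus_k_alpha_EV using EV_bot[OF k] by simp
      show "cinner (plus_k k) (ket_bot k) = 0" using vb by simp
      show "(cmod (cinner ?w ?e1))\<^sup>2 = (1 + S) / 2"
        unfolding plus_k_alpha_EV by (simp add: EV_inner \<alpha>_def cmod_cinner_swap[of "ket_plus_alpha (2 * \<beta>)" "q1 \<beta>"] inner_q_plus sb)
      show "(cmod (cinner ?w ?e2))\<^sup>2 = (1 - S) / 2"
        unfolding plus_k_alpha_EV by (simp add: EV_inner \<alpha>_def cmod_cinner_swap[of "ket_plus_alpha (2 * \<beta>)" "q2 \<beta>"] inner_q_plus sb)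
      show "(cmod (cinner (plus_k k) ?e1))\<^sup>2 = (1 - S) / 2"
        unfolding plus_k_EV[OF k] by (simp add: EV_inner cmod_cinner_swap[of ket_plus "q1 \<beta>"] inner_q_plus sb)
      show "(cmod (cinner (plus_k k) ?e2))\<^sup>2 = (1 + S) / 2"
        unfolding plus_k_EV[OF k] by (simp add: EV_inner cmod_cinner_swap[of ket_plus "q2 \<beta>"] inner_q_plus sb)
      show "0 \<le> S" "S \<le> 1" using S0 S2 by auto
    qed
    also have "complex_of_real hD \<cdot>\<^sub>m proj ?w + (1 - complex_of_real hD) \<cdot>\<^sub>m proj (ket_bot k) =
        rho_D k attack_after \<alpha> \<Omega> \<mu> T chi"
      using AD(1) unfolding rho_D_def Let_def TA_def[symmetric] hD_def by simp
    finally show ?thesis using pD by simp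
  qed
  have hH1: "hH \<le> 1" and hH0: "0 \<le> hH" using AH(5,6) unfolding hH_def by auto
  have "\<epsilon>H + \<epsilon>D \<ge> \<bar>1 - hH\<bar> + hD * S" using H D by simp
  moreover have "hD * S \<ge> (hH - S * sqrt Nm) * S" using hdiff S0 by (intro mult_right_mono) auto
  moreover have "\<bar>1 - hH\<bar> + (hH - S * sqrt Nm) * S \<ge> S - sqrt Nm * S\<^sup>2"
  proof -
    have "\<bar>1 - hH\<bar> + (hH - S * sqrt Nm) * S = (1 - hH) * (1 - S) + S - sqrt Nm * S\<^sup>2"
      using hH1 by (simp add: power2_eq_square algebra_simps)
    moreover have "(1 - hH) * (1 - S) \<ge> 0" using hH1 S2 by simp
    ultimately show ?thesis by simp
  qed
  moreover have "S - sqrt Nm * S\<^sup>2 = 1 / (4 * sqrt Nm)"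
    unfolding S_def using sN by (simp add: power2_eq_square field_simps)
  ultimately show ?thesis unfolding Nm_def[symmetric] by linarith
qed


end
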